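(* Let $S=\operatorname{FInv}\langle X\mid R\rangle$ with $R$ a symmetric relation on $\mathbb{I}\mathfrak{m}_X$, and let $\Gamma_X$ be the Cayley graph of its greatest group image $G$. Then for every term $w\in\mathbb{I}\mathfrak{m}_X$, the $F$-Schützenberger graph $F\Gamma(w)$ equals $\langle\overline w\rangle^{c_R}$, the smallest $c_R$-closed subgraph of $\Gamma_X$ containing $\langle\overline w\rangle$. Furthermore $F\Gamma(w)=\bigcup_{i\ge0}\Delta_i$, where $\Delta_0=\langle\overline w\rangle$ and $\Delta_{i+1}$ is the full $P$-expansion of $\Delta_i$ with respect to $R$.
   Context: $\operatorname{FInv}\langle X\mid R\rangle$ is the quotient of the free $F$-inverse monoid on $X$ (signature $(\cdot,1,{}^{-1},{}^{\mathfrak m})$, $s^{\mathfrak m}$ the greatest element of the $\sigma$-class of $s$) by the congruence generated by $R$. $\mathbb{I}\mathfrak{m}_X$ is the set of terms $u_0v_1^{\mathfrak m}u_1\cdots v_n^{\mathfrak m}u_n$ ($u_i,v_i\in(X\cup X^{-1})^*$). $\Gamma_X$: vertices $G$, edge labeled $x$ from $g$ to $gx_G$ ($x\in X\cup X^{-1}$) with inverse edges; subgraphs closed under endpoints and inverses. The journey labeled $w$ from $g$ is $g\overline w=(g\overline{u_0},g(u_0v_1)_G\overline{u_1},\dots,g(u_0v_1\cdots u_{n-1}v_n)_G\overline{u_n})$, $h\overline u$ the path from $h$ labeled by word $u$, $\overline w=1\overline w$; $\langle g\overline w\rangle$ is the union of the subgraphs spanned by its paths; $w$ labels a journey in $\Delta$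 from $g$ to $h$ if $gw_G=h$ and $\langle g\overline w\rangle\subseteq\Delta$. For a symmetric relation $Q$ on $\mathbb{I}\mathfrak{m}_X$ with pairs equal in $G$, a subgraph $\Delta$ is $c_Q$-closed if for all $(u,v)\in Q$ and $g,h\in V(\Delta)$, $u$ labels a journey in $\Delta$ from $g$ to $h$ iff $v$ does, and $\Delta^{c_Q}$ is the intersection of the $c_Q$-closed subgraphs containing $\Delta$. $c_S=c_Q$ for $Q=\{(u,v):u_S=v_S\}$, and $F\Gamma(w)=\langle\overline w\rangle^{c_S}$. The full $P$-expansion of $\Delta$ with respect to $R$ is $\Delta\cup\bigcup\langle g\overline v\rangle$ over all $(u,v)\in R$, $g\in V(\Delta)$ with $\langle g\overline u\rangle\subseteq\Delta$. *)

theory Defs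
  imports Main
begin

text \<open>The alphabet X is the type 'x.  A letter of X \<union> X^{-1} is (x, False) for x and
  (x, True) for x^{-1}.\<close>
type_synonym 'x letter = "'x \<times> bool"
type_synonym 'x word = "'x letter list"

definition inv_letter :: "'x letter \<Rightarrow> 'x letter" where
  "inv_letter a = (fst a, \<not> snd a)"

text \<open>A term u0 v1^m u1 ... vn^m un of Im_X is represented as (u0, [(v1,u1),...,(vn,un)]).\<close>
type_synonym 'x imterm = "'x word \<times> ('x word \<times> 'x word) list"

datatype 'x tm = Var 'x | One | Mul "'x tm" "'x tm" | Inv "'x tm" | Mx "'x tm"

definition letter_tm :: "'x letter \<Rightarrow> 'x tm" where
  "letter_tm a = (if snd a then Inv (Var (fst a)) else Var (fst a))"

fun word_tm :: "'x word \<Rightarrow> 'x tm" where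
  "word_tm [] = One"
| "word_tm (a # u) = Mul (letter_tm a) (word_tm u)"

definition imterm_tm :: "'x imterm \<Rightarrow> 'x tm" where
  "imterm_tm w = foldl (\<lambda>acc (v, u). Mul (Mul acc (Mx (word_tm v))) (word_tm u))
                       (word_tm (fst w)) (snd w)"

definition inverse_monoid ::
  "'a set \<Rightarrow> ('a \<Rightarrow> 'a \<Rightarrow> 'a) \<Rightarrow> 'a \<Rightarrow> ('a \<Rightarrow> 'a) \<Rightarrow> bool" where
  "inverse_monoid C mul one iv \<longleftrightarrow>
     one \<in> C \<and> (\<forall>x\<in>C. \<forall>y\<in>C. mul x y \<in> C) \<and>
     (\<forall>x\<in>C. \<forall>y\<in>C. \<forall>z\<in>C. mul (mul x y) z = mul x (mul y z)) \<and>
     (\<forall>x\<in>C. mul one x = x \<and> mul x one = x) \<and>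
     (\<forall>x\<in>C. iv x \<in> C \<and> mul (mul x (iv x)) x = x \<and> mul (mul (iv x) x) (iv x) = iv x \<and>
        (\<forall>y\<in>C. mul (mul x y) x = x \<and> mul (mul y x) y = y \<longrightarrow> y = iv x))"

definition sigma_rel :: "'a set \<Rightarrow> ('a \<Rightarrow> 'a \<Rightarrow> 'a) \<Rightarrow> 'a \<Rightarrow> 'a \<Rightarrow> bool" where
  "sigma_rel C mul s t \<longleftrightarrow> (\<exists>e\<in>C. mul e e = e \<and> mul e s = mul e t)"

definition nat_le :: "'a set \<Rightarrow> ('a \<Rightarrow> 'a \<Rightarrow> 'a) \<Rightarrow> 'a \<Rightarrow> 'a \<Rightarrow> bool" where
  "nat_le C mul s t \<longleftrightarrow> (\<exists>e\<in>C. mul e e = e \<and> s = mul e t)"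

definition F_inverse_monoid ::
  "'a set \<Rightarrow> ('a \<Rightarrow> 'a \<Rightarrow> 'a) \<Rightarrow> 'a \<Rightarrow> ('a \<Rightarrow> 'a) \<Rightarrow> ('a \<Rightarrow> 'a) \<Rightarrow> bool" where
  "F_inverse_monoid C mul one iv mx \<longleftrightarrow> inverse_monoid C mul one iv \<and>
     (\<forall>s\<in>C. mx s \<in> C \<and> sigma_rel C mul s (mx s) \<and>
        (\<forall>t\<in>C. sigma_rel C mul s t \<longrightarrow> nat_le C mul t (mx s)))"

primrec eval_tm ::
  "('a \<Rightarrow> 'a \<Rightarrow> 'a) \<Rightarrow> 'a \<Rightarrow> ('a \<Rightarrow> 'a) \<Rightarrow> ('a \<Rightarrow> 'a) \<Rightarrow> ('x \<Rightarrow> 'a) \<Rightarrow> 'x tm \<Rightarrow> 'a" where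
  "eval_tm mul one iv mx \<phi> (Var x) = \<phi> x"
| "eval_tm mul one iv mx \<phi> One = one"
| "eval_tm mul one iv mx \<phi> (Mul s t) = mul (eval_tm mul one iv mx \<phi> s) (eval_tm mul one iv mx \<phi> t)"
| "eval_tm mul one iv mx \<phi> (Inv s) = iv (eval_tm mul one iv mx \<phi> s)"
| "eval_tm mul one iv mx \<phi> (Mx s) = mx (eval_tm mul one iv mx \<phi> s)"

text \<open>Equality in S = FInv<X|R>: two terms are equal in the quotient of the free F-inverse
  monoid by the congruence generated by R iff they agree in every F-inverse monoid under every
  assignment satisfying R.  Since S itself is a model whose carrier injects into the type of
  terms, it suffices to quantify over models carried by sets of terms.\<close>
definition S_eq :: "('x imterm \<times> 'x imterm) set \<Rightarrow> 'x tm \<Rightarrow> 'x tm \<Rightarrow> bool" where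
  "S_eq R t1 t2 \<longleftrightarrow>
     (\<forall>(C :: 'x tm set) mul one iv mx \<phi>.
        F_inverse_monoid C mul one iv mx \<and> range \<phi> \<subseteq> C \<and>
        (\<forall>(u, v)\<in>R. eval_tm mul one iv mx \<phi> (imterm_tm u) = eval_tm mul one iv mx \<phi> (imterm_tm v))
        \<longrightarrow> eval_tm mul one iv mx \<phi> t1 = eval_tm mul one iv mx \<phi> t2)"

definition G_eq :: "('x imterm \<times> 'x imterm) set \<Rightarrow> 'x tm \<Rightarrow> 'x tm \<Rightarrow> bool" where
  "G_eq R t1 t2 \<longleftrightarrow> (\<exists>e. S_eq R (Mul e e) e \<and> S_eq R (Mul e t1) (Mul e t2))"

type_synonym 'x vert = "'x tm set"
type_synonym 'x edge = "'x vert \<times> 'x letter \<times> 'x vert"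
type_synonym 'x graph = "'x vert set \<times> 'x edge set"

definition Gcls :: "('x imterm \<times> 'x imterm) set \<Rightarrow> 'x tm \<Rightarrow> 'x vert" where
  "Gcls R t = {t'. G_eq R t t'}"

definition Gverts :: "('x imterm \<times> 'x imterm) set \<Rightarrow> 'x vert set" where
  "Gverts R = range (Gcls R)"

definition Gone :: "('x imterm \<times> 'x imterm) set \<Rightarrow> 'x vert" where
  "Gone R = Gcls R One"

definition gmul :: "('x imterm \<times> 'x imterm) set \<Rightarrow> 'x vert \<Rightarrow> 'x tm \<Rightarrow> 'x vert" where
  "gmul R g t = {t'. \<exists>r\<in>g. G_eq R (Mul r t) t'}"

definition Gedges :: "('x imterm \<times> 'x imterm) set \<Rightarrow> 'x edge set" where
  "Gedges R = {(g, a, gmul R g (letter_tm a)) | g a. g \<in> Gverts R}"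

definition subgraph :: "('x imterm \<times> 'x imterm) set \<Rightarrow> 'x graph \<Rightarrow> bool" where
  "subgraph R D \<longleftrightarrow> fst D \<subseteq> Gverts R \<and> snd D \<subseteq> Gedges R \<and>
     (\<forall>(g, a, h)\<in>snd D. g \<in> fst D \<and> h \<in> fst D \<and> (h, inv_letter a, g) \<in> snd D)"

definition sub_le :: "'x graph \<Rightarrow> 'x graph \<Rightarrow> bool" where
  "sub_le D1 D2 \<longleftrightarrow> fst D1 \<subseteq> fst D2 \<and> snd D1 \<subseteq> snd D2"

fun path_sub :: "('x imterm \<times> 'x imterm) set \<Rightarrow> 'x vert \<Rightarrow> 'x word \<Rightarrow> 'x graph" where
  "path_sub R h [] = ({h}, {})"
| "path_sub R h (a # u) =
     (insert h (fst (path_sub R (gmul R h (letter_tm a)) u)),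
      {(h, a, gmul R h (letter_tm a)), (gmul R h (letter_tm a), inv_letter a, h)}
        \<union> snd (path_sub R (gmul R h (letter_tm a)) u))"

fun jaux :: "('x imterm \<times> 'x imterm) set \<Rightarrow> 'x vert \<Rightarrow> 'x word \<Rightarrow> ('x word \<times> 'x word) list
             \<Rightarrow> ('x vert \<times> 'x word) list" where
  "jaux R g pre [] = []"
| "jaux R g pre ((v, u) # r) = (gmul R g (word_tm (pre @ v)), u) # jaux R g (pre @ v @ u) r"

text \<open>The paths of the journey g w: (starting vertex, label) pairs
  (g, u0), (g (u0 v1)_G, u1), ..., (g (u0 v1 ... u_{n-1} vn)_G, un).\<close>
definition jstarts :: "('x imterm \<times> 'x imterm) set \<Rightarrow> 'x vert \<Rightarrow> 'x imterm \<Rightarrow> ('x vert \<times> 'x word) list" where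
  "jstarts R g w = (g, fst w) # jaux R g (fst w) (snd w)"

definition jsub :: "('x imterm \<times> 'x imterm) set \<Rightarrow> 'x vert \<Rightarrow> 'x imterm \<Rightarrow> 'x graph" where
  "jsub R g w = ((\<Union>(h, u)\<in>set (jstarts R g w). fst (path_sub R h u)),
                 (\<Union>(h, u)\<in>set (jstarts R g w). snd (path_sub R h u)))"

definition labels_journey ::
  "('x imterm \<times> 'x imterm) set \<Rightarrow> 'x imterm \<Rightarrow> 'x graph \<Rightarrow> 'x vert \<Rightarrow> 'x vert \<Rightarrow> bool" where
  "labels_journey R w D g h \<longleftrightarrow> gmul R g (imterm_tm w) = h \<and> sub_le (jsub R g w) D"

definition cQ_closed ::
  "('x imterm \<times> 'x imterm) set \<Rightarrow> ('x imterm \<times> 'x imterm) set \<Rightarrow> 'x graph \<Rightarrow> bool" where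
  "cQ_closed R Q D \<longleftrightarrow> subgraph R D \<and>
     (\<forall>(u, v)\<in>Q. \<forall>g\<in>fst D. \<forall>h\<in>fst D. labels_journey R u D g h \<longleftrightarrow> labels_journey R v D g h)"

definition cQ_closure ::
  "('x imterm \<times> 'x imterm) set \<Rightarrow> ('x imterm \<times> 'x imterm) set \<Rightarrow> 'x graph \<Rightarrow> 'x graph" where
  "cQ_closure R Q D =
     (\<Inter>(fst ` {D'. cQ_closed R Q D' \<and> sub_le D D'}),
      \<Inter>(snd ` {D'. cQ_closed R Q D' \<and> sub_le D D'}))"

definition SQ :: "('x imterm \<times> 'x imterm) set \<Rightarrow> ('x imterm \<times> 'x imterm) set" where
  "SQ R = {(u, v). S_eq R (imterm_tm u) (imterm_tm v)}"

definition FGamma :: "('x imterm \<times> 'x imterm) set \<Rightarrow> 'x imterm \<Rightarrow> 'x graph" where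
  "FGamma R w = cQ_closure R (SQ R) (jsub R (Gone R) w)"

definition P_expansion :: "('x imterm \<times> 'x imterm) set \<Rightarrow> 'x graph \<Rightarrow> 'x graph" where
  "P_expansion R D =
     (fst D \<union> \<Union>{fst (jsub R g v) | g u v. (u, v) \<in> R \<and> g \<in> fst D \<and> sub_le (jsub R g u) D},
      snd D \<union> \<Union>{snd (jsub R g v) | g u v. (u, v) \<in> R \<and> g \<in> fst D \<and> sub_le (jsub R g u) D})"

definition Delta :: "('x imterm \<times> 'x imterm) set \<Rightarrow> 'x imterm \<Rightarrow> nat \<Rightarrow> 'x graph" where
  "Delta R w i = (P_expansion R ^^ i) (jsub R (Gone R) w)"

end

theory Submission
  imports Defs
begin


locale invm =
  fixes C :: "'a set" and mul :: "'a \<Rightarrow> 'a \<Rightarrow> 'a" (infixl "\<cdot>" 70) and one :: 'a and iv :: "'a \<Rightarrow> 'a"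
  assumes im: "inverse_monoid C mul one iv"
begin

lemma one_in[simp]: "one \<in> C" using im unfolding inverse_monoid_def by blast
lemma mul_in[simp]: "x \<in> C \<Longrightarrow> y \<in> C \<Longrightarrow> x \<cdot> y \<in> C" using im unfolding inverse_monoid_def by blast
lemma iv_in[simp]: "x \<in> C \<Longrightarrow> iv x \<in> C" using im unfolding inverse_monoid_def by blast
lemma assoc: "x \<in> C \<Longrightarrow> y \<in> C \<Longrightarrow> z \<in> C \<Longrightarrow> x \<cdot> y \<cdot> z = x \<cdot> (y \<cdot> z)"
  using im unfolding inverse_monoid_def by blast
lemma lid[simp]: "x \<in> C \<Longrightarrow> one \<cdot> x = x" using im unfolding inverse_monoid_def by blast
lemma rid[simp]: "x \<in> C \<Longrightarrow> x \<cdot> one = x" using im unfolding inverse_monoid_def by blast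
lemma inv1: "x \<in> C \<Longrightarrow> x \<cdot> iv x \<cdot> x = x" using im unfolding inverse_monoid_def by blast
lemma inv2: "x \<in> C \<Longrightarrow> iv x \<cdot> x \<cdot> iv x = iv x" using im unfolding inverse_monoid_def by blast
lemma uniq: "x \<in> C \<Longrightarrow> y \<in> C \<Longrightarrow> x \<cdot> y \<cdot> x = x \<Longrightarrow> y \<cdot> x \<cdot> y = y \<Longrightarrow> y = iv x"
  using im unfolding inverse_monoid_def by blast

lemma inv1': "x \<in> C \<Longrightarrow> x \<cdot> (iv x \<cdot> x) = x" using inv1 assoc by simp
lemma inv2': "x \<in> C \<Longrightarrow> iv x \<cdot> (x \<cdot> iv x) = iv x" using inv2 assoc by simp

lemma idem_iv: assumes "a \<in> C" "a \<cdot> a = a" shows "iv a = a"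
  using uniq[OF assms(1) assms(1)] assms by simp

lemma ef_idem:
  assumes eC: "e \<in> C" and fC: "f \<in> C" and ee: "e \<cdot> e = e" and ff: "f \<cdot> f = f"
  shows "e \<cdot> f \<cdot> (e \<cdot> f) = e \<cdot> f"
proof -
  define x where "x = e \<cdot> f"
  define a where "a = iv x"
  have xC: "x \<in> C" and aC: "a \<in> C" using eC fC by (auto simp: x_def a_def)
  define b where "b = f \<cdot> a \<cdot> e"
  have bC: "b \<in> C" using eC fC aC by (simp add: b_def)
  have xax: "x \<cdot> a \<cdot> x = x" using inv1[OF xC] by (simp add: a_def)
  have axa: "a \<cdot> x \<cdot> a = a" using inv2[OF xC] by (simp add: a_def)
  have "x \<cdot> b \<cdot> x = e \<cdot> (f \<cdot> f) \<cdot> a \<cdot> (e \<cdot> e) \<cdot> f"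
    using eC fC aC by (simp add: x_def b_def assoc)
  also have "\<dots> = x \<cdot> a \<cdot> x" using eC fC aC by (simp add: ee ff x_def assoc)
  finally have 1: "x \<cdot> b \<cdot> x = x" using xax by simp
  have "b \<cdot> x \<cdot> b = f \<cdot> (a \<cdot> (e \<cdot> e) \<cdot> (f \<cdot> f) \<cdot> a) \<cdot> e"
    using eC fC aC by (simp add: x_def b_def assoc)
  also have "\<dots> = f \<cdot> (a \<cdot> x \<cdot> a) \<cdot> e" using eC fC aC by (simp add: ee ff x_def assoc)
  finally have 2: "b \<cdot> x \<cdot> b = b" using axa by (simp add: b_def)
  have ab: "a = b" using uniq[OF xC bC 1 2] by (simp add: a_def)
  have "a \<cdot> a = b \<cdot> b" using ab by simp
  also have "\<dots> = f \<cdot> (a \<cdot> (e \<cdot> f) \<cdot> a) \<cdot> e" 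
    using eC fC aC by (simp add: b_def assoc)
  also have "\<dots> = f \<cdot> a \<cdot> e" using axa by (simp add: x_def)
  also have "\<dots> = a" using ab by (simp add: b_def)
  finally have aa: "a \<cdot> a = a" .
  have "x = iv a" using uniq[OF aC xC axa xax] .
  also have "\<dots> = a" using idem_iv[OF aC aa] .
  finally show ?thesis using aa x_def by simp
qed

lemma idem_comm:
  assumes eC: "e \<in> C" and fC: "f \<in> C" and ee: "e \<cdot> e = e" and ff: "f \<cdot> f = f"
  shows "e \<cdot> f = f \<cdot> e"
proof -
  have i1: "e \<cdot> f \<cdot> (e \<cdot> f) = e \<cdot> f" by (rule ef_idem[OF assms])
  have i2: "f \<cdot> e \<cdot> (f \<cdot> e) = f \<cdot> e" by (rule ef_idem[OF fC eC ff ee])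
  have 1: "e \<cdot> f \<cdot> (f \<cdot> e) \<cdot> (e \<cdot> f) = e \<cdot> f"
  proof -
    have "e \<cdot> f \<cdot> (f \<cdot> e) \<cdot> (e \<cdot> f) = e \<cdot> (f \<cdot> f) \<cdot> (e \<cdot> e) \<cdot> f" using eC fC by (simp add: assoc)
    also have "\<dots> = e \<cdot> f \<cdot> (e \<cdot> f)" using eC fC by (simp add: ee ff assoc)
    finally show ?thesis using i1 by simp
  qed
  have 2: "f \<cdot> e \<cdot> (e \<cdot> f) \<cdot> (f \<cdot> e) = f \<cdot> e"
  proof -
    have "f \<cdot> e \<cdot> (e \<cdot> f) \<cdot> (f \<cdot> e) = f \<cdot> (e \<cdot> e) \<cdot> (f \<cdot> f) \<cdot> e" using eC fC by (simp add: assoc)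
    also have "\<dots> = f \<cdot> e \<cdot> (f \<cdot> e)" using eC fC by (simp add: ee ff assoc)
    finally show ?thesis using i2 by simp
  qed
  have "f \<cdot> e = iv (e \<cdot> f)" using uniq[OF _ _ 1 2] eC fC by simp
  also have "\<dots> = e \<cdot> f" using idem_iv[OF _ i1] eC fC by simp
  finally show ?thesis by simp
qed

lemma xxi_idem: "x \<in> C \<Longrightarrow> x \<cdot> iv x \<cdot> (x \<cdot> iv x) = x \<cdot> iv x"
  by (metis assoc inv1 iv_in mul_in)
lemma xix_idem: "x \<in> C \<Longrightarrow> iv x \<cdot> x \<cdot> (iv x \<cdot> x) = iv x \<cdot> x"
  by (metis assoc inv1 iv_in mul_in)

end



context invm begin
lemma inv1r: "x \<in> C \<Longrightarrow> y \<in> C \<Longrightarrow> x \<cdot> (iv x \<cdot> (x \<cdot> y)) = x \<cdot> y"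
  by (metis assoc inv1 iv_in mul_in)

lemma conj_idem:
  assumes cC: "c \<in> C" and eC: "e \<in> C" and ee: "e \<cdot> e = e"
  shows "c \<cdot> e \<cdot> iv c \<cdot> (c \<cdot> e \<cdot> iv c) = c \<cdot> e \<cdot> iv c"
proof -
  have fi: "iv c \<cdot> c \<cdot> (iv c \<cdot> c) = iv c \<cdot> c" using xix_idem cC by simp
  have com: "e \<cdot> (iv c \<cdot> c) = iv c \<cdot> c \<cdot> e" using idem_comm[OF eC _ ee fi] cC by simp
  have "c \<cdot> e \<cdot> iv c \<cdot> (c \<cdot> e \<cdot> iv c) = c \<cdot> (e \<cdot> (iv c \<cdot> c)) \<cdot> e \<cdot> iv c"
    using cC eC by (simp add: assoc)
  also have "\<dots> = c \<cdot> (iv c \<cdot> c) \<cdot> (e \<cdot> e) \<cdot> iv c" using cC eC by (simp add: com assoc)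
  also have "\<dots> = c \<cdot> e \<cdot> iv c" using cC eC by (simp add: ee inv1')
  finally show ?thesis .
qed

lemma conj_mul:
  assumes cC: "c \<in> C" and eC: "e \<in> C" and ee: "e \<cdot> e = e" and xC: "x \<in> C"
  shows "c \<cdot> e \<cdot> iv c \<cdot> (c \<cdot> x) = c \<cdot> (e \<cdot> x)"
proof -
  have fi: "iv c \<cdot> c \<cdot> (iv c \<cdot> c) = iv c \<cdot> c" using xix_idem cC by simp
  have com: "e \<cdot> (iv c \<cdot> c) = iv c \<cdot> c \<cdot> e" using idem_comm[OF eC _ ee fi] cC by simp
  have "c \<cdot> e \<cdot> iv c \<cdot> (c \<cdot> x) = c \<cdot> (e \<cdot> (iv c \<cdot> c)) \<cdot> x"
    using cC eC xC by (simp add: assoc)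
  also have "\<dots> = c \<cdot> (iv c \<cdot> c) \<cdot> e \<cdot> x" using cC eC xC by (simp add: com assoc)
  also have "\<dots> = c \<cdot> (e \<cdot> x)" using cC eC xC by (simp add: inv1r assoc)
  finally show ?thesis .
qed

lemma trans_idem:
  assumes "e1 \<in> C" "e2 \<in> C" "e1 \<cdot> e1 = e1" "e2 \<cdot> e2 = e2" "t1 \<in> C" "t2 \<in> C" "t3 \<in> C"
    "e1 \<cdot> t1 = e1 \<cdot> t2" "e2 \<cdot> t2 = e2 \<cdot> t3"
  shows "e1 \<cdot> e2 \<cdot> t1 = e1 \<cdot> e2 \<cdot> t3"
proof -
  have c: "e1 \<cdot> e2 = e2 \<cdot> e1" using idem_comm assms by simp
  have "e1 \<cdot> e2 \<cdot> t1 = e2 \<cdot> (e1 \<cdot> t1)" using c assms by (simp add: assoc)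
  also have "\<dots> = e2 \<cdot> (e1 \<cdot> t2)" using assms by simp
  also have "\<dots> = e1 \<cdot> (e2 \<cdot> t2)" using c assms by (metis assoc)
  also have "\<dots> = e1 \<cdot> e2 \<cdot> t3" using assms by (simp add: assoc)
  finally show ?thesis .
qed

lemma below_mx:
  assumes sC: "s \<in> C" and mC: "m \<in> C" and fC: "f \<in> C" and ff: "f \<cdot> f = f" and s: "s = f \<cdot> m"
  shows "s \<cdot> iv s \<cdot> m = s"
proof -
  have fs: "f \<cdot> s = s" using s ff fC mC by (metis assoc)
  have ii: "s \<cdot> iv s \<cdot> (s \<cdot> iv s) = s \<cdot> iv s" using xxi_idem sC by simp
  have "s \<cdot> iv s = f \<cdot> (s \<cdot> iv s)" using fs fC sC assoc[of f s "iv s"] by simp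
  also have "\<dots> = s \<cdot> iv s \<cdot> f" using idem_comm[OF fC _ ff ii] sC by simp
  finally have 1: "s \<cdot> iv s = s \<cdot> iv s \<cdot> f" .
  have "s \<cdot> iv s \<cdot> m = s \<cdot> iv s \<cdot> f \<cdot> m" using 1 by simp
  also have "\<dots> = s \<cdot> iv s \<cdot> s" using s sC fC mC by (simp add: assoc)
  also have "\<dots> = s" using inv1 sC by simp
  finally show ?thesis .
qed
end

lemma Finv_invm: "F_inverse_monoid C mul one iv mx \<Longrightarrow> invm C mul one iv"
  unfolding F_inverse_monoid_def invm_def by blast

lemma Finv_mx_in: "F_inverse_monoid C mul one iv mx \<Longrightarrow> s \<in> C \<Longrightarrow> mx s \<in> C"
  unfolding F_inverse_monoid_def by blast

lemma Finv_le_mx: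
  assumes F: "F_inverse_monoid C mul one iv mx" and s: "s \<in> C"
  shows "\<exists>f\<in>C. mul f f = f \<and> s = mul f (mx s)"
proof -
  interpret invm C mul one iv using Finv_invm[OF F] .
  have "sigma_rel C mul s s" unfolding sigma_rel_def by (rule bexI[of _ one]) (use s in simp_all)
  then have "nat_le C mul s (mx s)" using F s unfolding F_inverse_monoid_def by blast
  then show ?thesis unfolding nat_le_def by blast
qed

abbreviation ev where "ev mul one iv mx \<phi> \<equiv> eval_tm mul one iv mx \<phi>"

lemma eval_in:
  assumes F: "F_inverse_monoid C mul one iv mx" and ph: "range \<phi> \<subseteq> C"
  shows "eval_tm mul one iv mx \<phi> t \<in> C"
proof -
  interpret invm C mul one iv using Finv_invm[OF F] .
  show ?thesis by (induction t) (use ph Finv_mx_in[OF F] in auto)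
qed

definition Mdl :: "('x imterm \<times> 'x imterm) set \<Rightarrow> 'x tm set \<Rightarrow> ('x tm \<Rightarrow> 'x tm \<Rightarrow> 'x tm) \<Rightarrow> 'x tm
  \<Rightarrow> ('x tm \<Rightarrow> 'x tm) \<Rightarrow> ('x tm \<Rightarrow> 'x tm) \<Rightarrow> ('x \<Rightarrow> 'x tm) \<Rightarrow> bool" where "Mdl R C mul one iv mx \<phi> \<longleftrightarrow>
        F_inverse_monoid C mul one iv mx \<and> range \<phi> \<subseteq> C \<and>
        (\<forall>(u, v)\<in>R. eval_tm mul one iv mx \<phi> (imterm_tm u) = eval_tm mul one iv mx \<phi> (imterm_tm v))"

lemma S_eq_alt: "S_eq R (a :: 'x tm) b \<longleftrightarrow> (\<forall>(C :: 'x tm set) mul one iv mx \<phi>. Mdl R C mul one iv mx \<phi> \<longrightarrow>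
   eval_tm mul one iv mx \<phi> a = eval_tm mul one iv mx \<phi> b)"
  unfolding S_eq_def Mdl_def by (rule refl)

lemma S_eqD: "S_eq R (a :: 'x tm) b \<Longrightarrow> Mdl R (C :: 'x tm set) mul one iv mx \<phi> \<Longrightarrow> eval_tm mul one iv mx \<phi> a = eval_tm mul one iv mx \<phi> b"
  unfolding S_eq_alt by (erule allE[where x=C], erule allE[where x=mul], erule allE[where x=one],
    erule allE[where x=iv], erule allE[where x=mx], erule allE[where x=\<phi>]) (erule mp)

lemma S_eqI: "(\<And>(C :: 'x tm set) mul one iv mx \<phi>. Mdl R C mul one iv mx \<phi> \<Longrightarrow>
   eval_tm mul one iv mx \<phi> (a :: 'x tm) = eval_tm mul one iv mx \<phi> b) \<Longrightarrow> S_eq R a b"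
  unfolding S_eq_alt by (intro allI impI)

lemma Mdl_F: "Mdl R C mul one iv mx \<phi> \<Longrightarrow> F_inverse_monoid C mul one iv mx" unfolding Mdl_def by blast
lemma Mdl_in: "Mdl R C mul one iv mx \<phi> \<Longrightarrow> eval_tm mul one iv mx \<phi> t \<in> C"
  unfolding Mdl_def by (elim conjE, rule eval_in)
lemma Mdl_invm: "Mdl R C mul one iv mx \<phi> \<Longrightarrow> invm C mul one iv"
  by (rule Finv_invm[OF Mdl_F])

lemma S_refl: "S_eq R a a" by (rule S_eqI) simp
lemma S_sym: "S_eq R a b \<Longrightarrow> S_eq R b a" by (rule S_eqI) (simp add: S_eqD)
lemma S_trans: "S_eq R a b \<Longrightarrow> S_eq R b c \<Longrightarrow> S_eq R a c" by (rule S_eqI) (simp add: S_eqD)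
lemma S_Mul: "S_eq R a a' \<Longrightarrow> S_eq R b b' \<Longrightarrow> S_eq R (Mul a b) (Mul a' b')" by (rule S_eqI) (simp add: S_eqD)
lemma S_Inv: "S_eq R a a' \<Longrightarrow> S_eq R (Inv a) (Inv a')" by (rule S_eqI) (simp add: S_eqD)
lemma S_Mx: "S_eq R a a' \<Longrightarrow> S_eq R (Mx a) (Mx a')" by (rule S_eqI) (simp add: S_eqD)
lemma S_assoc: "S_eq R (Mul (Mul a b) c) (Mul a (Mul b c))"
proof (rule S_eqI)
  fix C mul one iv mx \<phi> assume M: "Mdl R C mul one iv mx \<phi>"
  interpret invm C mul one iv using Mdl_invm[OF M] .
  show "ev mul one iv mx \<phi> (Mul (Mul a b) c) = ev mul one iv mx \<phi> (Mul a (Mul b c))"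
    using Mdl_in[OF M] by (simp add: assoc)
qed
lemma S_lid: "S_eq R (Mul One a) a"
proof (rule S_eqI)
  fix C mul one iv mx \<phi> assume M: "Mdl R C mul one iv mx \<phi>"
  interpret invm C mul one iv using Mdl_invm[OF M] .
  show "ev mul one iv mx \<phi> (Mul One a) = ev mul one iv mx \<phi> a"
    using Mdl_in[OF M] by simp
qed
lemma S_rid: "S_eq R (Mul a One) a"
proof (rule S_eqI)
  fix C mul one iv mx \<phi> assume M: "Mdl R C mul one iv mx \<phi>"
  interpret invm C mul one iv using Mdl_invm[OF M] .
  show "ev mul one iv mx \<phi> (Mul a One) = ev mul one iv mx \<phi> a"
    using Mdl_in[OF M] by simp
qed

lemma S_R: "(u, v) \<in> R \<Longrightarrow> S_eq R (imterm_tm u) (imterm_tm v)"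
  unfolding S_eq_alt Mdl_def by blast

lemma G_of_S: "S_eq R a b \<Longrightarrow> G_eq R a b"
  unfolding G_eq_def by (rule exI[of _ One]) (blast intro: S_Mul S_lid S_refl)

lemma G_refl: "G_eq R a a" by (rule G_of_S[OF S_refl])
lemma G_sym: "G_eq R a b \<Longrightarrow> G_eq R b a" unfolding G_eq_def using S_sym by blast

lemma G_trans: assumes "G_eq R a b" "G_eq R b c" shows "G_eq R a c"
proof -
  obtain e1 where e1: "S_eq R (Mul e1 e1) e1" "S_eq R (Mul e1 a) (Mul e1 b)" using assms(1) unfolding G_eq_def by blast
  obtain e2 where e2: "S_eq R (Mul e2 e2) e2" "S_eq R (Mul e2 b) (Mul e2 c)" using assms(2) unfolding G_eq_def by blast
  show ?thesis unfolding G_eq_def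
  proof (intro exI conjI)
    show "S_eq R (Mul (Mul e1 e2) (Mul e1 e2)) (Mul e1 e2)"
    proof (rule S_eqI)
      fix C mul one iv mx \<phi> assume M: "Mdl R C mul one iv mx \<phi>"
      interpret invm C mul one iv using Mdl_invm[OF M] .
      show "ev mul one iv mx \<phi> (Mul (Mul e1 e2) (Mul e1 e2)) = ev mul one iv mx \<phi> (Mul e1 e2)"
        using ef_idem Mdl_in[OF M] S_eqD[OF e1(1) M] S_eqD[OF e2(1) M] by simp
    qed
    show "S_eq R (Mul (Mul e1 e2) a) (Mul (Mul e1 e2) c)"
    proof (rule S_eqI)
      fix C mul one iv mx \<phi> assume M: "Mdl R C mul one iv mx \<phi>"
      interpret invm C mul one iv using Mdl_invm[OF M] .
      show "ev mul one iv mx \<phi> (Mul (Mul e1 e2) a) = ev mul one iv mx \<phi> (Mul (Mul e1 e2) c)"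
        using trans_idem[OF Mdl_in[OF M] Mdl_in[OF M] _ _ Mdl_in[OF M] Mdl_in[OF M] Mdl_in[OF M], of e1 e2 a b c]
          S_eqD[OF e1(1) M] S_eqD[OF e2(1) M] S_eqD[OF e1(2) M] S_eqD[OF e2(2) M] by simp
    qed
  qed
qed

lemma G_mulR: assumes "G_eq R a b" shows "G_eq R (Mul a c) (Mul b c)"
proof -
  obtain e where e: "S_eq R (Mul e e) e" "S_eq R (Mul e a) (Mul e b)" using assms unfolding G_eq_def by blast
  have "S_eq R (Mul e (Mul a c)) (Mul e (Mul b c))"
    by (rule S_trans[OF S_sym[OF S_assoc]], rule S_trans[OF S_Mul[OF e(2) S_refl]], rule S_assoc)
  then show ?thesis using e(1) unfolding G_eq_def by blast
qed

lemma G_mulL: assumes "G_eq R a b" shows "G_eq R (Mul c a) (Mul c b)"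
proof -
  obtain e where e: "S_eq R (Mul e e) e" "S_eq R (Mul e a) (Mul e b)" using assms unfolding G_eq_def by blast
  show ?thesis unfolding G_eq_def
  proof (intro exI conjI)
    show "S_eq R (Mul (Mul (Mul c e) (Inv c)) (Mul (Mul c e) (Inv c))) (Mul (Mul c e) (Inv c))"
    proof (rule S_eqI)
      fix C mul one iv mx \<phi> assume M: "Mdl R C mul one iv mx \<phi>"
      interpret invm C mul one iv using Mdl_invm[OF M] .
      show "ev mul one iv mx \<phi> (Mul (Mul (Mul c e) (Inv c)) (Mul (Mul c e) (Inv c))) = ev mul one iv mx \<phi> (Mul (Mul c e) (Inv c))"
        using conj_idem Mdl_in[OF M] S_eqD[OF e(1) M] by simp
    qed
    show "S_eq R (Mul (Mul (Mul c e) (Inv c)) (Mul c a)) (Mul (Mul (Mul c e) (Inv c)) (Mul c b))"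
    proof (rule S_eqI)
      fix C mul one iv mx \<phi> assume M: "Mdl R C mul one iv mx \<phi>"
      interpret invm C mul one iv using Mdl_invm[OF M] .
      show "ev mul one iv mx \<phi> (Mul (Mul (Mul c e) (Inv c)) (Mul c a)) = ev mul one iv mx \<phi> (Mul (Mul (Mul c e) (Inv c)) (Mul c b))"
        using conj_mul Mdl_in[OF M] S_eqD[OF e(1) M] S_eqD[OF e(2) M] by simp
    qed
  qed
qed

lemma G_Mul: "G_eq R a a' \<Longrightarrow> G_eq R b b' \<Longrightarrow> G_eq R (Mul a b) (Mul a' b')"
  by (blast intro: G_mulL G_mulR G_trans)

lemma G_assoc: "G_eq R (Mul (Mul a b) c) (Mul a (Mul b c))" by (rule G_of_S[OF S_assoc])
lemma G_lid: "G_eq R (Mul One a) a" by (rule G_of_S[OF S_lid])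
lemma G_rid: "G_eq R (Mul a One) a" by (rule G_of_S[OF S_rid])

lemma G_rinv: "G_eq R (Mul a (Inv a)) One"
  unfolding G_eq_def
proof (intro exI conjI)
  show "S_eq R (Mul (Mul a (Inv a)) (Mul a (Inv a))) (Mul a (Inv a))"
  proof (rule S_eqI)
    fix C mul one iv mx \<phi> assume M: "Mdl R C mul one iv mx \<phi>"
    interpret invm C mul one iv using Mdl_invm[OF M] .
    show "ev mul one iv mx \<phi> (Mul (Mul a (Inv a)) (Mul a (Inv a))) = ev mul one iv mx \<phi> (Mul a (Inv a))"
      using xxi_idem Mdl_in[OF M] by simp
  qed
  show "S_eq R (Mul (Mul a (Inv a)) (Mul a (Inv a))) (Mul (Mul a (Inv a)) One)"
  proof (rule S_eqI)
    fix C mul one iv mx \<phi> assume M: "Mdl R C mul one iv mx \<phi>"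
    interpret invm C mul one iv using Mdl_invm[OF M] .
    show "ev mul one iv mx \<phi> (Mul (Mul a (Inv a)) (Mul a (Inv a))) = ev mul one iv mx \<phi> (Mul (Mul a (Inv a)) One)"
      using xxi_idem Mdl_in[OF M] by simp
  qed
qed

lemma G_linv: "G_eq R (Mul (Inv a) a) One"
  unfolding G_eq_def
proof (intro exI conjI)
  show "S_eq R (Mul (Mul (Inv a) a) (Mul (Inv a) a)) (Mul (Inv a) a)"
  proof (rule S_eqI)
    fix C mul one iv mx \<phi> assume M: "Mdl R C mul one iv mx \<phi>"
    interpret invm C mul one iv using Mdl_invm[OF M] .
    show "ev mul one iv mx \<phi> (Mul (Mul (Inv a) a) (Mul (Inv a) a)) = ev mul one iv mx \<phi> (Mul (Inv a) a)"
      using xix_idem Mdl_in[OF M] by simp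
  qed
  show "S_eq R (Mul (Mul (Inv a) a) (Mul (Inv a) a)) (Mul (Mul (Inv a) a) One)"
  proof (rule S_eqI)
    fix C mul one iv mx \<phi> assume M: "Mdl R C mul one iv mx \<phi>"
    interpret invm C mul one iv using Mdl_invm[OF M] .
    show "ev mul one iv mx \<phi> (Mul (Mul (Inv a) a) (Mul (Inv a) a)) = ev mul one iv mx \<phi> (Mul (Mul (Inv a) a) One)"
      using xix_idem Mdl_in[OF M] by simp
  qed
qed

lemma G_Mx: "G_eq R (Mx a) a"
  unfolding G_eq_def
proof (intro exI conjI)
  show "S_eq R (Mul (Mul a (Inv a)) (Mul a (Inv a))) (Mul a (Inv a))"
  proof (rule S_eqI)
    fix C mul one iv mx \<phi> assume M: "Mdl R C mul one iv mx \<phi>"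
    interpret invm C mul one iv using Mdl_invm[OF M] .
    show "ev mul one iv mx \<phi> (Mul (Mul a (Inv a)) (Mul a (Inv a))) = ev mul one iv mx \<phi> (Mul a (Inv a))"
      using xxi_idem Mdl_in[OF M] by simp
  qed
  show "S_eq R (Mul (Mul a (Inv a)) (Mx a)) (Mul (Mul a (Inv a)) a)"
  proof (rule S_eqI)
    fix C mul one iv mx \<phi> assume M: "Mdl R C mul one iv mx \<phi>"
    interpret invm C mul one iv using Mdl_invm[OF M] .
    define s where "s = ev mul one iv mx \<phi> a"
    have sC: "s \<in> C" using Mdl_in[OF M] s_def by simp
    obtain f where f: "f \<in> C" "mul f f = f" "s = mul f (mx s)" using Finv_le_mx[OF Mdl_F[OF M] sC] by blast
    have "mul (mul s (iv s)) (mx s) = s" 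
      by (rule below_mx[OF sC Finv_mx_in[OF Mdl_F[OF M] sC] f])
    then show "ev mul one iv mx \<phi> (Mul (Mul a (Inv a)) (Mx a)) = ev mul one iv mx \<phi> (Mul (Mul a (Inv a)) a)"
      using sC by (simp add: s_def[symmetric] inv1)
  qed
qed



lemma Gcls_eq_iff: "Gcls R a = Gcls R b \<longleftrightarrow> G_eq R a b"
proof
  assume "Gcls R a = Gcls R b"
  then have "b \<in> Gcls R a" using G_refl[of R b] unfolding Gcls_def by blast
  then show "G_eq R a b" unfolding Gcls_def by simp
next
  assume "G_eq R a b"
  then show "Gcls R a = Gcls R b" unfolding Gcls_def using G_trans G_sym by blast
qed

lemma gmul_Gcls: "gmul R (Gcls R a) t = Gcls R (Mul a t)"
  unfolding gmul_def Gcls_def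
proof (intro set_eqI iffI; simp)
  fix x assume "\<exists>r. G_eq R a r \<and> G_eq R (Mul r t) x"
  then obtain r where "G_eq R a r" "G_eq R (Mul r t) x" by blast
  then show "G_eq R (Mul a t) x" using G_mulR G_trans by blast
next
  fix x assume "G_eq R (Mul a t) x"
  then show "\<exists>r. G_eq R a r \<and> G_eq R (Mul r t) x" using G_refl by blast
qed

lemma Gverts_E: "g \<in> Gverts R \<Longrightarrow> (\<And>a. g = Gcls R a \<Longrightarrow> P) \<Longrightarrow> P"
  unfolding Gverts_def by blast

lemma Gcls_in[simp]: "Gcls R a \<in> Gverts R" unfolding Gverts_def by blast
lemma Gone_in[simp]: "Gone R \<in> Gverts R" unfolding Gone_def by simp

lemma gmul_in[simp]: "g \<in> Gverts R \<Longrightarrow> gmul R g t \<in> Gverts R"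
  by (erule Gverts_E) (simp add: gmul_Gcls)

lemma gmul_assoc: "g \<in> Gverts R \<Longrightarrow> gmul R (gmul R g s) t = gmul R g (Mul s t)"
  by (erule Gverts_E) (simp add: gmul_Gcls Gcls_eq_iff G_assoc)

lemma gmul_cong: "g \<in> Gverts R \<Longrightarrow> G_eq R s t \<Longrightarrow> gmul R g s = gmul R g t"
  by (erule Gverts_E) (simp add: gmul_Gcls Gcls_eq_iff G_mulL)

lemma gmul_One[simp]: "g \<in> Gverts R \<Longrightarrow> gmul R g One = g"
  by (erule Gverts_E) (simp add: gmul_Gcls Gcls_eq_iff G_rid)

lemma gmul_inv1[simp]: "g \<in> Gverts R \<Longrightarrow> gmul R (gmul R g t) (Inv t) = g"
  by (simp add: gmul_assoc gmul_cong[OF _ G_rinv])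

lemma gmul_inv2[simp]: "g \<in> Gverts R \<Longrightarrow> gmul R (gmul R g (Inv t)) t = g"
  by (simp add: gmul_assoc gmul_cong[OF _ G_linv])

lemma gmul_Mx[simp]: "g \<in> Gverts R \<Longrightarrow> gmul R g (Mx t) = gmul R g t"
  by (simp add: gmul_cong[OF _ G_Mx])

lemma Gcls_gmul: "Gcls R t = gmul R (Gone R) t"
  by (simp add: Gone_def gmul_Gcls Gcls_eq_iff G_lid G_sym)

lemma gmul_cancel: assumes g: "g \<in> Gverts R" and e: "gmul R g s = gmul R g t" shows "G_eq R s t"
proof -
  obtain a where ga: "g = Gcls R a" using g by (rule Gverts_E)
  have st: "G_eq R (Mul a s) (Mul a t)" using e ga by (simp add: gmul_Gcls Gcls_eq_iff)
  have "Gcls R s = gmul R (gmul R (Gcls R (Inv a)) a) s" by (simp add: Gcls_gmul)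
  also have "\<dots> = gmul R (Gcls R (Inv a)) (Mul a s)" by (simp add: gmul_assoc)
  also have "\<dots> = gmul R (Gcls R (Inv a)) (Mul a t)" using st by (simp add: gmul_cong)
  also have "\<dots> = gmul R (gmul R (Gcls R (Inv a)) a) t" by (simp add: gmul_assoc)
  also have "\<dots> = Gcls R t" by (simp add: Gcls_gmul)
  finally show ?thesis by (simp add: Gcls_eq_iff)
qed

lemma G_Inv: assumes "G_eq R a b" shows "G_eq R (Inv a) (Inv b)"
proof -
  have eq: "gmul R (gmul R (Gone R) (Inv a)) b = gmul R (gmul R (Gone R) (Inv a)) a"
    by (rule gmul_cong) (simp_all add: G_sym assms)
  have "gmul R (Gone R) (Inv a) = gmul R (gmul R (gmul R (Gone R) (Inv a)) b) (Inv b)" by simp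
  also have "\<dots> = gmul R (gmul R (gmul R (Gone R) (Inv a)) a) (Inv b)"
    by (simp only: eq)
  also have "\<dots> = gmul R (Gone R) (Inv b)" by simp
  finally have e: "gmul R (Gone R) (Inv a) = gmul R (Gone R) (Inv b)" .
  show ?thesis by (rule gmul_cancel[OF _ e]) simp
qed

lemma letter_inv: "g \<in> Gverts R \<Longrightarrow> gmul R (gmul R g (letter_tm a)) (letter_tm (inv_letter a)) = g"
  by (cases a) (auto simp: letter_tm_def inv_letter_def)

lemma inv_inv_letter[simp]: "inv_letter (inv_letter a) = a" by (simp add: inv_letter_def)



definition gU :: "'x graph \<Rightarrow> 'x graph \<Rightarrow> 'x graph" where
  "gU A B = (fst A \<union> fst B, snd A \<union> snd B)"

definition WG :: "('x imterm \<times> 'x imterm) set \<Rightarrow> 'x graph" where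
  "WG R = (Gverts R, Gedges R)"

lemma sub_le_refl[simp]: "sub_le D D" by (simp add: sub_le_def)
lemma sub_le_trans: "sub_le A B \<Longrightarrow> sub_le B C \<Longrightarrow> sub_le A C" by (auto simp: sub_le_def)
lemma sub_le_antisym: "sub_le A B \<Longrightarrow> sub_le B A \<Longrightarrow> A = B"
  by (auto simp: sub_le_def intro: prod_eqI)
lemma sub_le_gU: "sub_le (gU A B) C \<longleftrightarrow> sub_le A C \<and> sub_le B C" by (auto simp: sub_le_def gU_def)
lemma sub_le_gU1: "sub_le A (gU A B)" and sub_le_gU2: "sub_le B (gU A B)" by (auto simp: sub_le_def gU_def)

lemma Gedges_I: "g \<in> Gverts R \<Longrightarrow> (g, a, gmul R g (letter_tm a)) \<in> Gedges R"
  unfolding Gedges_def by blast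

lemma Gedges_inv: "g \<in> Gverts R \<Longrightarrow> (gmul R g (letter_tm a), inv_letter a, g) \<in> Gedges R"
  using Gedges_I[of "gmul R g (letter_tm a)" R "inv_letter a"] letter_inv[of g R a] by simp

lemma subgraph_iff: "subgraph R D \<longleftrightarrow> fst D \<subseteq> Gverts R \<and> snd D \<subseteq> Gedges R \<and>
  (\<forall>g a h. (g, a, h) \<in> snd D \<longrightarrow> g \<in> fst D \<and> h \<in> fst D \<and> (h, inv_letter a, g) \<in> snd D)"
  unfolding subgraph_def by fast

lemma Gedges_E: "(g, a, h) \<in> Gedges R \<Longrightarrow> (g \<in> Gverts R \<Longrightarrow> h = gmul R g (letter_tm a) \<Longrightarrow> P) \<Longrightarrow> P"
  unfolding Gedges_def by blast

lemma subgraph_WG: "subgraph R (WG R)"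
  unfolding subgraph_iff WG_def fst_conv snd_conv
proof (intro conjI allI impI subset_refl)
  fix g a h assume e: "(g, a, h) \<in> Gedges R"
  then have h: "h = gmul R g (letter_tm a)" and g: "g \<in> Gverts R" by (auto elim: Gedges_E)
  show "g \<in> Gverts R" by (rule g)
  show "h \<in> Gverts R" using g h by simp
  show "(h, inv_letter a, g) \<in> Gedges R" using Gedges_inv[OF g, of a] h by simp
qed

lemma subgraph_le_WG: "subgraph R D \<Longrightarrow> sub_le D (WG R)"
  unfolding subgraph_def WG_def sub_le_def by auto

lemma subgraph_gU: "subgraph R A \<Longrightarrow> subgraph R B \<Longrightarrow> subgraph R (gU A B)"
  unfolding subgraph_iff gU_def fst_conv snd_conv by blast

lemma subgraph_vert: "X \<subseteq> Gverts R \<Longrightarrow> subgraph R (X, {})"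
  unfolding subgraph_def by auto

lemma path_sub_props:
  "g \<in> Gverts R \<Longrightarrow> subgraph R (path_sub R g u) \<and> g \<in> fst (path_sub R g u) \<and>
     gmul R g (word_tm u) \<in> fst (path_sub R g u)"
proof (induction u arbitrary: g)
  case Nil
  then show ?case by (simp add: subgraph_vert)
next
  case (Cons a u)
  define g' where "g' = gmul R g (letter_tm a)"
  have g'V: "g' \<in> Gverts R" using Cons.prems by (simp add: g'_def)
  note IH = Cons.IH[OF g'V]
  have e1: "(g, a, g') \<in> Gedges R" using Gedges_I[OF Cons.prems] by (simp add: g'_def)
  have e2: "(g', inv_letter a, g) \<in> Gedges R" using Gedges_inv[OF Cons.prems] by (simp add: g'_def)
  have sg: "subgraph R (path_sub R g (a # u))"
    using IH e1 e2 Cons.prems unfolding subgraph_def by (auto simp: g'_def[symmetric] Let_def)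
  have "gmul R g (word_tm (a # u)) = gmul R g' (word_tm u)"
    using Cons.prems by (simp add: g'_def gmul_assoc)
  then show ?case using sg IH by (simp add: g'_def[symmetric])
qed

lemma path_sub_finite: "finite (fst (path_sub R g u)) \<and> finite (snd (path_sub R g u))"
  by (induction u arbitrary: g) auto

fun gr :: "('x imterm \<times> 'x imterm) set \<Rightarrow> 'x vert \<Rightarrow> 'x tm \<Rightarrow> 'x graph" where
  "gr R k (Var x) = path_sub R k [(x, False)]"
| "gr R k One = ({k}, {})"
| "gr R k (Mul s t) = gU (gr R k s) (gr R (gmul R k s) t)"
| "gr R k (Inv s) = gr R (gmul R k (Inv s)) s"
| "gr R k (Mx s) = ({k, gmul R k s}, {})"

lemma gr_props:
  "k \<in> Gverts R \<Longrightarrow> subgraph R (gr R k t) \<and> k \<in> fst (gr R k t) \<and> gmul R k t \<in> fst (gr R k t)"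
proof (induction t arbitrary: k)
  case (Var x)
  then show ?case using path_sub_props[OF Var, of "[(x, False)]"] by (simp add: letter_tm_def)
next
  case One
  then show ?case by (simp add: subgraph_vert)
next
  case (Mul s t)
  have "gmul R k s \<in> Gverts R" using Mul.prems by simp
  then have I1: "subgraph R (gr R k s) \<and> k \<in> fst (gr R k s)" 
    and I2: "subgraph R (gr R (gmul R k s) t) \<and> gmul R (gmul R k s) t \<in> fst (gr R (gmul R k s) t)"
    using Mul.IH(1)[OF Mul.prems] Mul.IH(2)[of "gmul R k s"] by blast+
  have "subgraph R (gr R k (Mul s t))" using I1 I2 by (simp add: subgraph_gU)
  then show ?case using I1 I2 Mul.prems by (simp add: gU_def gmul_assoc)
next
  case (Inv s)
  have "gmul R k (Inv s) \<in> Gverts R" using Inv.prems by simp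
  then show ?case using Inv.IH[of "gmul R k (Inv s)"] Inv.prems by simp
next
  case (Mx s)
  then show ?case by (simp add: subgraph_vert)
qed

lemma gr_letter: "k \<in> Gverts R \<Longrightarrow> gr R k (letter_tm a) =
   ({k, gmul R k (letter_tm a)}, {(k, a, gmul R k (letter_tm a)), (gmul R k (letter_tm a), inv_letter a, k)})"
  by (cases a) (auto simp: letter_tm_def inv_letter_def)

lemma gr_word: "k \<in> Gverts R \<Longrightarrow> gr R k (word_tm u) = path_sub R k u"
proof (induction u arbitrary: k)
  case Nil
  then show ?case by simp
next
  case (Cons a u)
  define k' where "k' = gmul R k (letter_tm a)"
  have k'V: "k' \<in> Gverts R" using Cons.prems by (simp add: k'_def)
  have "k' \<in> fst (path_sub R k' u)" using path_sub_props[OF k'V] by blast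
  then show ?case using Cons.IH[OF k'V] gr_letter[OF Cons.prems, of a]
    by (auto simp: gU_def k'_def[symmetric] intro!: prod_eqI)
qed

lemma gmul_word_append: "g \<in> Gverts R \<Longrightarrow> gmul R g (word_tm (p @ q)) = gmul R (gmul R g (word_tm p)) (word_tm q)"
  by (induction p arbitrary: g) (simp_all add: gmul_assoc[symmetric])

definition pU :: "('x imterm \<times> 'x imterm) set \<Rightarrow> ('x vert \<times> 'x word) list \<Rightarrow> 'x graph" where
  "pU R l = ((\<Union>(h, u)\<in>set l. fst (path_sub R h u)), (\<Union>(h, u)\<in>set l. snd (path_sub R h u)))"

lemma pU_Cons: "pU R ((h, u) # l) = gU (path_sub R h u) (pU R l)"
  by (simp add: pU_def gU_def)

lemma pU_Nil: "pU R [] = ({}, {})" by (simp add: pU_def)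

definition stepf :: "'x tm \<Rightarrow> 'x word \<times> 'x word \<Rightarrow> 'x tm" where
  "stepf = (\<lambda>acc (v, u). Mul (Mul acc (Mx (word_tm v))) (word_tm u))"

lemma imterm_stepf: "imterm_tm w = foldl stepf (word_tm (fst w)) (snd w)"
  unfolding imterm_tm_def stepf_def by simp

lemma gr_foldl:
  assumes "k \<in> Gverts R" "gmul R k acc = gmul R k (word_tm pre)"
  shows "gr R k (foldl stepf acc ps) = gU (gr R k acc) (pU R (jaux R k pre ps))"
  using assms(2)
proof (induction ps arbitrary: acc pre)
  case Nil
  then show ?case by (simp add: pU_Nil gU_def)
next
  case (Cons p ps)
  obtain v u where p: "p = (v, u)" by (cases p)
  define acc' where "acc' = Mul (Mul acc (Mx (word_tm v))) (word_tm u)"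
  define h where "h = gmul R k (word_tm (pre @ v))"
  have hV: "h \<in> Gverts R" using assms(1) by (simp add: h_def)
  have kaV: "gmul R k acc \<in> Gverts R" using assms(1) by simp
  have h2: "gmul R k (Mul acc (Mx (word_tm v))) = h"
    using assms(1) Cons.prems by (simp add: gmul_assoc[symmetric] h_def gmul_word_append)
  have e: "gmul R k acc' = gmul R k (word_tm (pre @ v @ u))"
    using assms(1) h2 by (simp add: acc'_def gmul_assoc[symmetric] h_def gmul_word_append)
  have IH: "gr R k (foldl stepf acc' ps) = gU (gr R k acc') (pU R (jaux R k (pre @ v @ u) ps))"
    using Cons.IH[OF e] .
  have ka: "gmul R k acc \<in> fst (gr R k acc)" using gr_props[OF assms(1)] by blast
  have hh: "h \<in> fst (path_sub R h u)" using path_sub_props[OF hV] by blast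
  have "gr R k acc' = gU (gr R k acc) (path_sub R h u)"
    using h2 ka hh gr_word[OF hV, of u] assms(1) Cons.prems
    by (auto simp: acc'_def gU_def gmul_assoc[symmetric] h_def gmul_word_append intro!: prod_eqI)
  then show ?case using IH by (simp add: p stepf_def acc'_def[symmetric] h_def[symmetric] pU_Cons gU_def Un_assoc)
qed

lemma gr_imterm: "k \<in> Gverts R \<Longrightarrow> gr R k (imterm_tm w) = jsub R k w"
proof -
  assume k: "k \<in> Gverts R"
  have "gr R k (imterm_tm w) = gU (gr R k (word_tm (fst w))) (pU R (jaux R k (fst w) (snd w)))"
    unfolding imterm_stepf by (rule gr_foldl[OF k refl])
  also have "\<dots> = jsub R k w"
    using gr_word[OF k] by (simp add: jsub_def jstarts_def pU_def gU_def)
  finally show ?thesis .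
qed

lemma jsub_props: "g \<in> Gverts R \<Longrightarrow> subgraph R (jsub R g w) \<and> g \<in> fst (jsub R g w) \<and>
   gmul R g (imterm_tm w) \<in> fst (jsub R g w)"
  using gr_props[of g R "imterm_tm w"] gr_imterm[of g R w] by simp

lemma jsub_finite: "finite (fst (jsub R g w)) \<and> finite (snd (jsub R g w))"
  unfolding jsub_def using path_sub_finite by auto



definition Qok :: "('x imterm \<times> 'x imterm) set \<Rightarrow> ('x imterm \<times> 'x imterm) set \<Rightarrow> bool" where
  "Qok R Q \<longleftrightarrow> (\<forall>(u, v)\<in>Q. G_eq R (imterm_tm u) (imterm_tm v))"

lemma Qok_R: "Qok R R" unfolding Qok_def using S_R G_of_S by blast
lemma Qok_SQ: "Qok R (SQ R)" unfolding Qok_def SQ_def using G_of_S by blast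

lemma labels_journey_iff: "labels_journey R u D g h \<longleftrightarrow> gmul R g (imterm_tm u) = h \<and> sub_le (jsub R g u) D"
  by (simp add: labels_journey_def)

lemma closed_WG: assumes "Qok R Q" shows "cQ_closed R Q (WG R)"
  unfolding cQ_closed_def
proof (intro conjI subgraph_WG ballI; clarify)
  fix u v g h assume uv: "(u, v) \<in> Q" and g: "g \<in> fst (WG R)" and "h \<in> fst (WG R)"
  have gV: "g \<in> Gverts R" using g by (simp add: WG_def)
  have eq: "gmul R g (imterm_tm u) = gmul R g (imterm_tm v)"
    using assms uv unfolding Qok_def by (intro gmul_cong[OF gV]) blast
  have "sub_le (jsub R g u) (WG R)" "sub_le (jsub R g v) (WG R)"
    using jsub_props[OF gV] subgraph_le_WG by blast+
  then show "labels_journey R u (WG R) g h = labels_journey R v (WG R) g h"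
    using eq by (simp add: labels_journey_iff)
qed

lemma closed_Inter:
  assumes ne: "F \<noteq> {}" and cl: "\<And>D. D \<in> F \<Longrightarrow> cQ_closed R Q D"
  shows "cQ_closed R Q (\<Inter>(fst ` F), \<Inter>(snd ` F))"
proof -
  have sg: "\<And>D. D \<in> F \<Longrightarrow> subgraph R D" using cl unfolding cQ_closed_def by blast
  have sgV: "\<And>D. D \<in> F \<Longrightarrow> fst D \<subseteq> Gverts R" using sg unfolding subgraph_iff by blast
  have sgE: "\<And>D. D \<in> F \<Longrightarrow> snd D \<subseteq> Gedges R" using sg unfolding subgraph_iff by blast
  have sgI: "\<And>D g a h. D \<in> F \<Longrightarrow> (g, a, h) \<in> snd D \<Longrightarrow> g \<in> fst D \<and> h \<in> fst D \<and> (h, inv_letter a, g) \<in> snd D"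
    using sg unfolding subgraph_iff by blast
  have sgr: "subgraph R (\<Inter>(fst ` F), \<Inter>(snd ` F))"
    unfolding subgraph_iff fst_conv snd_conv
  proof (intro conjI allI impI)
    show "\<Inter>(fst ` F) \<subseteq> Gverts R" using ne sgV by blast
    show "\<Inter>(snd ` F) \<subseteq> Gedges R" using ne sgE by blast
    fix g a h assume e: "(g, a, h) \<in> \<Inter>(snd ` F)"
    show "g \<in> \<Inter>(fst ` F)" using e sgI by blast
    show "h \<in> \<Inter>(fst ` F)" using e sgI by blast
    show "(h, inv_letter a, g) \<in> \<Inter>(snd ` F)" using e sgI by blast
  qed
  have lab: "labels_journey R u (\<Inter>(fst ` F), \<Inter>(snd ` F)) g h = labels_journey R v (\<Inter>(fst ` F), \<Inter>(snd ` F)) g h"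
    if uv: "(u, v) \<in> Q" and g: "g \<in> \<Inter>(fst ` F)" and h: "h \<in> \<Inter>(fst ` F)" for u v g h
  proof -
    have lj: "labels_journey R x (\<Inter>(fst ` F), \<Inter>(snd ` F)) g h \<longleftrightarrow> (\<forall>D\<in>F. labels_journey R x D g h)" for x
    proof -
      have "labels_journey R x (\<Inter>(fst ` F), \<Inter>(snd ` F)) g h \<longleftrightarrow>
         gmul R g (imterm_tm x) = h \<and> (\<forall>D\<in>F. fst (jsub R g x) \<subseteq> fst D \<and> snd (jsub R g x) \<subseteq> snd D)"
        unfolding labels_journey_iff sub_le_def fst_conv snd_conv le_INF_iff by blast
      also have "\<dots> \<longleftrightarrow> (\<forall>D\<in>F. labels_journey R x D g h)"
        unfolding labels_journey_iff sub_le_def using ne by blast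
      finally show ?thesis .
    qed
    have each: "labels_journey R u D g h = labels_journey R v D g h" if D: "D \<in> F" for D
    proof -
      have "g \<in> fst D" "h \<in> fst D" using g h D by blast+
      then show ?thesis using cl[OF D] uv unfolding cQ_closed_def by blast
    qed
    show ?thesis unfolding lj using each by blast
  qed
  show ?thesis unfolding cQ_closed_def
  proof (intro conjI sgr ballI; clarify)
    fix u v g h assume "(u, v) \<in> Q" "g \<in> fst (\<Inter>(fst ` F), \<Inter>(snd ` F))" "h \<in> fst (\<Inter>(fst ` F), \<Inter>(snd ` F))"
    then show "labels_journey R u (\<Inter>(fst ` F), \<Inter>(snd ` F)) g h = labels_journey R v (\<Inter>(fst ` F), \<Inter>(snd ` F)) g h"
      by (intro lab) simp_all
  qed
qed

lemma closure_props:
  assumes Q: "Qok R Q" and D: "sub_le D (WG R)"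
  shows "cQ_closed R Q (cQ_closure R Q D)" and "sub_le D (cQ_closure R Q D)"
proof -
  let ?F = "{D'. cQ_closed R Q D' \<and> sub_le D D'}"
  have ne: "?F \<noteq> {}" using closed_WG[OF Q] D by blast
  show "cQ_closed R Q (cQ_closure R Q D)" unfolding cQ_closure_def
    by (rule closed_Inter[OF ne]) blast
  show "sub_le D (cQ_closure R Q D)" unfolding cQ_closure_def sub_le_def by auto
qed

lemma closure_least:
  assumes "cQ_closed R Q X" "sub_le D X"
  shows "sub_le (cQ_closure R Q D) X"
  using assms unfolding cQ_closure_def sub_le_def by auto

lemma closed_subgraph: "cQ_closed R Q X \<Longrightarrow> subgraph R X" unfolding cQ_closed_def by blast

lemma closure_cong:
  assumes "\<And>X. cQ_closed R Q X \<longleftrightarrow> cQ_closed R Q' X"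
  shows "cQ_closure R Q D = cQ_closure R Q' D"
  unfolding cQ_closure_def using assms by simp



declare sub_le_trans[trans]

abbreviation cl where "cl R \<equiv> cQ_closure R R"

lemma cl_closed: "sub_le D (WG R) \<Longrightarrow> cQ_closed R R (cl R D)"
  using closure_props(1)[OF Qok_R] .
lemma cl_ext: "sub_le D (WG R) \<Longrightarrow> sub_le D (cl R D)"
  using closure_props(2)[OF Qok_R] .

lemma cl_WG: "sub_le D (WG R) \<Longrightarrow> sub_le (cl R D) (WG R)"
  by (rule closure_least[OF closed_WG[OF Qok_R]])

lemma cl_mono: "sub_le A B \<Longrightarrow> sub_le B (WG R) \<Longrightarrow> sub_le (cl R A) (cl R B)"
  by (rule closure_least[OF cl_closed]) (auto intro: sub_le_trans cl_ext)

lemma cl_idem_le: "sub_le A (WG R) \<Longrightarrow> sub_le (cl R (cl R A)) (cl R A)"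
  by (rule closure_least[OF cl_closed]) auto

lemma cl_eqI: "sub_le A (WG R) \<Longrightarrow> sub_le B (WG R) \<Longrightarrow> sub_le A (cl R B) \<Longrightarrow> sub_le B (cl R A) \<Longrightarrow> cl R A = cl R B"
  by (intro sub_le_antisym; rule closure_least[OF cl_closed]) auto

lemma gU_WG: "sub_le A (WG R) \<Longrightarrow> sub_le B (WG R) \<Longrightarrow> sub_le (gU A B) (WG R)"
  by (simp add: sub_le_gU)

lemma cl_gU_cl1: assumes "sub_le A (WG R)" "sub_le B (WG R)" shows "cl R (gU (cl R A) B) = cl R (gU A B)"
proof (rule cl_eqI)
  show "sub_le (gU (cl R A) B) (WG R)" using assms by (simp add: sub_le_gU cl_WG)
  show "sub_le (gU A B) (WG R)" using assms by (simp add: sub_le_gU)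
  show "sub_le (gU (cl R A) B) (cl R (gU A B))" unfolding sub_le_gU
    using assms by (meson cl_ext cl_mono gU_WG sub_le_gU1 sub_le_gU2 sub_le_trans)
  show "sub_le (gU A B) (cl R (gU (cl R A) B))" unfolding sub_le_gU
    using assms by (meson cl_ext cl_WG gU_WG sub_le_gU1 sub_le_gU2 sub_le_trans)
qed

lemma gU_comm: "gU A B = gU B A" by (auto simp: gU_def)

lemma cl_gU_cl2: assumes "sub_le A (WG R)" "sub_le B (WG R)" shows "cl R (gU A (cl R B)) = cl R (gU A B)"
  using cl_gU_cl1[OF assms(2,1)] by (simp add: gU_comm)

lemma gr_WG: "k \<in> Gverts R \<Longrightarrow> sub_le (gr R k t) (WG R)"
  using gr_props subgraph_le_WG by blast

lemma gr_fst: "k \<in> Gverts R \<Longrightarrow> k \<in> fst (gr R k t)" and gr_fst2: "k \<in> Gverts R \<Longrightarrow> gmul R k t \<in> fst (gr R k t)"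
  using gr_props by blast+

lemma gU_absorb: "sub_le B A \<Longrightarrow> gU A B = A" unfolding gU_def sub_le_def by (simp add: Un_absorb2)
lemma gU_absorb': "sub_le A B \<Longrightarrow> gU A B = B" unfolding gU_def sub_le_def by (simp add: Un_absorb1)
lemma gU_idem[simp]: "gU A A = A" by (auto simp: gU_def)
lemma vert_le: "X \<subseteq> fst A \<Longrightarrow> sub_le (X, {}) A" by (simp add: sub_le_def)

definition E :: "('x imterm \<times> 'x imterm) set \<Rightarrow> 'x tm \<Rightarrow> ('x vert \<Rightarrow> 'x graph) \<times> 'x vert" where
  "E R t = ((\<lambda>k. if k \<in> Gverts R then cl R (gr R k t) else ({}, {})), Gcls R t)"

lemma E_eqI:
  assumes "\<And>k. k \<in> Gverts R \<Longrightarrow> cl R (gr R k a) = cl R (gr R k b)" and "G_eq R a b"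
  shows "E R a = E R b"
  using assms unfolding E_def by (auto simp: Gcls_eq_iff)

lemma E_eqI2:
  assumes "\<And>k. k \<in> Gverts R \<Longrightarrow> gr R k a = gr R k b" and "G_eq R a b"
  shows "E R a = E R b"
  using assms by (intro E_eqI) auto

lemma E_eqD1: assumes "E R a = E R b" "k \<in> Gverts R" shows "cl R (gr R k a) = cl R (gr R k b)"
proof -
  have "fst (E R a) k = fst (E R b) k" using assms(1) by simp
  then show ?thesis using assms(2) by (simp add: E_def)
qed

lemma E_eqD2: "E R a = E R b \<Longrightarrow> G_eq R a b"
  unfolding E_def by (auto simp: Gcls_eq_iff)

lemma E_Mul: assumes "E R a = E R a'" "E R b = E R b'" shows "E R (Mul a b) = E R (Mul a' b')"
proof (rule E_eqI)
  have ga: "G_eq R a a'" and gb: "G_eq R b b'" using E_eqD2 assms by blast+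
  show "G_eq R (Mul a b) (Mul a' b')" using G_Mul[OF ga gb] .
  fix k assume k: "k \<in> Gverts R"
  have ka: "gmul R k a = gmul R k a'" using gmul_cong[OF k ga] .
  have kaV: "gmul R k a \<in> Gverts R" using k by simp
  have "cl R (gr R k (Mul a b)) = cl R (gU (cl R (gr R k a)) (cl R (gr R (gmul R k a) b)))"
    using k kaV by (simp add: cl_gU_cl1 cl_gU_cl2 gr_WG cl_WG)
  also have "\<dots> = cl R (gU (cl R (gr R k a')) (cl R (gr R (gmul R k a') b')))"
    using E_eqD1[OF assms(1) k] E_eqD1[OF assms(2) kaV] ka by simp
  also have "\<dots> = cl R (gr R k (Mul a' b'))"
    using k kaV ka by (simp add: cl_gU_cl1 cl_gU_cl2 gr_WG cl_WG)
  finally show "cl R (gr R k (Mul a b)) = cl R (gr R k (Mul a' b'))" .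
qed

lemma E_Inv: assumes "E R a = E R a'" shows "E R (Inv a) = E R (Inv a')"
proof (rule E_eqI)
  have ga: "G_eq R a a'" using E_eqD2 assms by blast
  show "G_eq R (Inv a) (Inv a')" using G_Inv[OF ga] .
  fix k assume k: "k \<in> Gverts R"
  have "gmul R k (Inv a) = gmul R k (Inv a')" using gmul_cong[OF k G_Inv[OF ga]] .
  then show "cl R (gr R k (Inv a)) = cl R (gr R k (Inv a'))"
    using E_eqD1[OF assms, of "gmul R k (Inv a)"] k by simp
qed

lemma E_Mx: assumes "E R a = E R a'" shows "E R (Mx a) = E R (Mx a')"
proof (rule E_eqI2)
  have ga: "G_eq R a a'" using E_eqD2 assms by blast
  show "G_eq R (Mx a) (Mx a')" using G_Mx G_sym G_trans ga by metis
  fix k assume k: "k \<in> Gverts R"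
  show "gr R k (Mx a) = gr R k (Mx a')" using gmul_cong[OF k ga] by simp
qed

lemma gr_xxi: "k \<in> Gverts R \<Longrightarrow> gr R k (Mul x (Inv x)) = gr R k x" by simp
lemma gmul_xxi[simp]: "k \<in> Gverts R \<Longrightarrow> gmul R k (Mul x (Inv x)) = k" by (simp add: gmul_assoc[symmetric])
lemma gmul_xix[simp]: "k \<in> Gverts R \<Longrightarrow> gmul R k (Mul (Inv x) x) = k" by (simp add: gmul_assoc[symmetric])

lemma I_assoc: "E R (Mul (Mul x y) z) = E R (Mul x (Mul y z))"
  by (rule E_eqI2) (auto simp: G_assoc gmul_assoc gU_def)

lemma I_lid: "E R (Mul One x) = E R x"
  by (rule E_eqI2) (auto simp: G_lid gU_absorb' vert_le gr_fst)

lemma I_rid: "E R (Mul x One) = E R x"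
  by (rule E_eqI2) (auto simp: G_rid gU_absorb vert_le gr_fst2)

lemma G_via: "(\<And>k. k \<in> Gverts R \<Longrightarrow> gmul R k a = gmul R k b) \<Longrightarrow> G_eq R a b"
  using gmul_cancel[of "Gone R" R a b] by simp

lemma I_inv1: "E R (Mul (Mul x (Inv x)) x) = E R x"
  by (rule E_eqI2) (auto intro: G_via simp: gmul_assoc[symmetric])

lemma I_inv2: "E R (Mul (Mul (Inv x) x) (Inv x)) = E R (Inv x)"
  by (rule E_eqI2) (auto intro: G_via simp: gmul_assoc[symmetric])

lemma I_idem: "E R (Mul (Mul s (Inv s)) (Mul s (Inv s))) = E R (Mul s (Inv s))"
  by (rule E_eqI2) (auto intro: G_via simp: gmul_assoc[symmetric])

lemma I_sigma: "E R (Mul (Mul s (Inv s)) s) = E R (Mul (Mul s (Inv s)) (Mx s))"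
  by (rule E_eqI2) (auto intro: G_via simp: gmul_assoc[symmetric] gU_absorb vert_le gr_fst gr_fst2)

lemma I_natle: assumes "G_eq R s t" shows "E R t = E R (Mul (Mul t (Inv t)) (Mx s))"
proof (rule E_eqI2)
  fix k assume k: "k \<in> Gverts R"
  have "gmul R k s = gmul R k t" using gmul_cong[OF k assms] .
  then show "gr R k t = gr R k (Mul (Mul t (Inv t)) (Mx s))"
    using k by (simp add: gU_absorb vert_le gr_fst gr_fst2)
next
  show "G_eq R t (Mul (Mul t (Inv t)) (Mx s))"
  proof (rule G_via)
    fix k assume k: "k \<in> Gverts R"
    have "gmul R k (Mul (Mul t (Inv t)) (Mx s)) = gmul R k s" using k by (simp add: gmul_assoc[symmetric])
    also have "\<dots> = gmul R k t" using gmul_cong[OF k assms] .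
    finally show "gmul R k t = gmul R k (Mul (Mul t (Inv t)) (Mx s))" by simp
  qed
qed

lemma I_uniq:
  assumes 1: "E R (Mul (Mul x y) x) = E R x" and 2: "E R (Mul (Mul y x) y) = E R y"
  shows "E R y = E R (Inv x)"
proof -
  have g1: "G_eq R (Mul (Mul x y) x) x" using E_eqD2[OF 1] .
  have kxy: "gmul R (gmul R k x) y = k" if k: "k \<in> Gverts R" for k
  proof -
    have "gmul R (gmul R (gmul R k x) y) x = gmul R k x"
      using gmul_cong[OF k g1] k by (simp add: gmul_assoc)
    then have "gmul R (gmul R (gmul R (gmul R k x) y) x) (Inv x) = gmul R (gmul R k x) (Inv x)" by simp
    then show ?thesis using k by simp
  qed
  have gy: "G_eq R y (Inv x)"
  proof (rule G_via)
    fix k assume k: "k \<in> Gverts R"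
    show "gmul R k y = gmul R k (Inv x)" using kxy[of "gmul R k (Inv x)"] k by simp
  qed
  show ?thesis
  proof (rule E_eqI)
    show "G_eq R y (Inv x)" by (rule gy)
    fix k assume k: "k \<in> Gverts R"
    define k' where "k' = gmul R k (Inv x)"
    have k'V: "k' \<in> Gverts R" using k by (simp add: k'_def)
    have kk: "gmul R k' x = k" using k by (simp add: k'_def)
    have ky: "gmul R k y = k'" using gmul_cong[OF k gy] by (simp add: k'_def)
    have A: "sub_le (gr R (gmul R j x) y) (cl R (gr R j x))" if j: "j \<in> Gverts R" for j
    proof -
      have "sub_le (gr R (gmul R j x) y) (gr R j (Mul (Mul x y) x))" by (auto simp: gU_def sub_le_def)
      also have "sub_le \<dots> (cl R (gr R j (Mul (Mul x y) x)))" using cl_ext gr_WG j by blast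
      finally show ?thesis using E_eqD1[OF 1 j] by simp
    qed
    have B: "sub_le (gr R (gmul R j y) x) (cl R (gr R j y))" if j: "j \<in> Gverts R" for j
    proof -
      have "sub_le (gr R (gmul R j y) x) (gr R j (Mul (Mul y x) y))" by (auto simp: gU_def sub_le_def)
      also have "sub_le \<dots> (cl R (gr R j (Mul (Mul y x) y)))" using cl_ext gr_WG j by blast
      finally show ?thesis using E_eqD1[OF 2 j] by simp
    qed
    have "cl R (gr R k y) = cl R (gr R k' x)"
      by (rule cl_eqI) (use A[OF k'V] B[OF k] kk ky k k'V gr_WG in auto)
    then show "cl R (gr R k y) = cl R (gr R k (Inv x))" by (simp add: k'_def)
  qed
qed



definition rep :: "('x imterm \<times> 'x imterm) set \<Rightarrow> 'x tm \<Rightarrow> 'x tm" where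
  "rep R t = (SOME t'. E R t' = E R t)"

lemma E_rep[simp]: "E R (rep R t) = E R t"
  unfolding rep_def by (rule someI_ex) blast

lemma rep_cong: "E R s = E R t \<Longrightarrow> rep R s = rep R t"
  unfolding rep_def by simp

lemma C_eqI: "x \<in> range (rep R) \<Longrightarrow> y \<in> range (rep R) \<Longrightarrow> E R x = E R y \<Longrightarrow> x = y"
  by (auto intro: rep_cong)

lemma E_Mul_rep1[simp]: "E R (Mul (rep R s) t) = E R (Mul s t)" by (rule E_Mul) simp_all
lemma E_Mul_rep2[simp]: "E R (Mul s (rep R t)) = E R (Mul s t)" by (rule E_Mul) simp_all
lemma E_Inv_rep[simp]: "E R (Inv (rep R s)) = E R (Inv s)" by (rule E_Inv) simp
lemma E_Mx_rep[simp]: "E R (Mx (rep R s)) = E R (Mx s)" by (rule E_Mx) simp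

lemma E_Mul_rep3[simp]: "E R (Mul (Mul a (rep R b)) c) = E R (Mul (Mul a b) c)"
  by (rule E_Mul) simp_all
lemma E_Mul_rep4[simp]: "E R (Mul (Mul (rep R a) b) c) = E R (Mul (Mul a b) c)"
  by (rule E_Mul) simp_all

definition mM where "mM R x y = rep R (Mul x y)"
definition oM where "oM R = rep R One"
definition iM where "iM R x = rep R (Inv x)"
definition xM where "xM R x = rep R (Mx x)"
definition phM where "phM R x = rep R (Var x)"

lemma in_range_rep[simp]: "rep R t \<in> range (rep R)" by simp

lemma model_invm: "inverse_monoid (range (rep R)) (mM R) (oM R) (iM R)"
  unfolding inverse_monoid_def
proof (intro conjI ballI allI impI)
  show "oM R \<in> range (rep R)" by (simp add: oM_def)
  fix x y z assume x: "x \<in> range (rep R)" and y: "y \<in> range (rep R)"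
  show "mM R x y \<in> range (rep R)" by (simp add: mM_def)
  { assume z: "z \<in> range (rep R)"
    show "mM R (mM R x y) z = mM R x (mM R y z)"
      unfolding mM_def by (rule rep_cong) (simp add: I_assoc) }
  { assume 1: "mM R (mM R x y) x = x \<and> mM R (mM R y x) y = y"
    have a: "E R (Mul (Mul x y) x) = E R x" using arg_cong[OF conjunct1[OF 1], of "E R"] by (simp add: mM_def)
    have b: "E R (Mul (Mul y x) y) = E R y" using arg_cong[OF conjunct2[OF 1], of "E R"] by (simp add: mM_def)
    show "y = iM R x" by (rule C_eqI[OF y]) (simp_all add: iM_def I_uniq[OF a b]) }
next
  fix x assume x: "x \<in> range (rep R)"
  show "mM R (oM R) x = x" by (rule C_eqI[OF _ x]) (simp_all add: mM_def oM_def I_lid)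
  show "mM R x (oM R) = x" by (rule C_eqI[OF _ x]) (simp_all add: mM_def oM_def I_rid)
  show "iM R x \<in> range (rep R)" by (simp add: iM_def)
  show "mM R (mM R x (iM R x)) x = x" by (rule C_eqI[OF _ x]) (simp_all add: mM_def iM_def I_inv1)
  show "mM R (mM R (iM R x) x) (iM R x) = iM R x" by (rule C_eqI[where R=R]) (simp_all add: mM_def iM_def I_inv2)
qed

lemma model_F: "F_inverse_monoid (range (rep R)) (mM R) (oM R) (iM R) (xM R)"
  unfolding F_inverse_monoid_def
proof (intro conjI ballI impI model_invm)
  fix s assume s: "s \<in> range (rep R)"
  show "xM R s \<in> range (rep R)" by (simp add: xM_def)
  show "sigma_rel (range (rep R)) (mM R) s (xM R s)"
    unfolding sigma_rel_def
  proof (intro bexI conjI)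
    show "mM R (rep R (Mul s (Inv s))) (rep R (Mul s (Inv s))) = rep R (Mul s (Inv s))"
      unfolding mM_def by (rule rep_cong) (simp add: I_idem)
    show "mM R (rep R (Mul s (Inv s))) s = mM R (rep R (Mul s (Inv s))) (xM R s)"
      unfolding mM_def xM_def by (rule rep_cong) (simp add: I_sigma)
  qed simp
  fix t assume t: "t \<in> range (rep R)" and st: "sigma_rel (range (rep R)) (mM R) s t"
  then obtain e where e: "mM R e s = mM R e t" unfolding sigma_rel_def by blast
  have "E R (Mul e s) = E R (Mul e t)" using arg_cong[OF e, of "E R"] by (simp add: mM_def)
  then have "G_eq R (Mul e s) (Mul e t)" by (rule E_eqD2)
  then have "gmul R (Gcls R e) s = gmul R (Gcls R e) t" by (simp add: gmul_Gcls Gcls_eq_iff)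
  then have gst: "G_eq R s t" by (rule gmul_cancel[rotated]) simp
  show "nat_le (range (rep R)) (mM R) t (xM R s)"
    unfolding nat_le_def
  proof (intro bexI conjI)
    show "mM R (rep R (Mul t (Inv t))) (rep R (Mul t (Inv t))) = rep R (Mul t (Inv t))"
      unfolding mM_def by (rule rep_cong) (simp add: I_idem)
    show "t = mM R (rep R (Mul t (Inv t))) (xM R s)"
      unfolding mM_def xM_def by (rule C_eqI[OF t]) (simp_all add: I_natle[OF gst, symmetric])
  qed simp
qed

lemma model_eval: "eval_tm (mM R) (oM R) (iM R) (xM R) (phM R) t = rep R t"
proof (induction t)
  case (Mul s t)
  then show ?case by (simp add: mM_def) (rule rep_cong, simp)
next
  case (Inv s)
  then show ?case by (simp add: iM_def) (rule rep_cong, simp)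
next
  case (Mx s)
  then show ?case by (simp add: xM_def) (rule rep_cong, simp)
qed (simp_all add: phM_def oM_def)

lemma closed_transfer:
  assumes X: "cQ_closed R Q X" and uv: "(u, v) \<in> Q" and k: "k \<in> fst X" and le: "sub_le (jsub R k u) X"
  shows "sub_le (jsub R k v) X"
proof -
  have kV: "k \<in> Gverts R" using closed_subgraph[OF X] k unfolding subgraph_def by blast
  define h where "h = gmul R k (imterm_tm u)"
  have h: "h \<in> fst X" using jsub_props[OF kV, of u] le unfolding h_def sub_le_def by blast
  have "labels_journey R u X k h" using le by (simp add: labels_journey_iff h_def)
  then have "labels_journey R v X k h" using X uv k h unfolding cQ_closed_def by blast
  then show ?thesis by (simp add: labels_journey_iff)
qed

lemma closed_transfer':
  assumes X: "cQ_closed R Q X" and uv: "(u, v) \<in> Q" and k: "k \<in> fst X" and le: "sub_le (jsub R k v) X"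
  shows "sub_le (jsub R k u) X"
proof -
  have kV: "k \<in> Gverts R" using closed_subgraph[OF X] k unfolding subgraph_def by blast
  define h where "h = gmul R k (imterm_tm v)"
  have h: "h \<in> fst X" using jsub_props[OF kV, of v] le unfolding h_def sub_le_def by blast
  have "labels_journey R v X k h" using le by (simp add: labels_journey_iff h_def)
  then have "labels_journey R u X k h" using X uv k h unfolding cQ_closed_def by blast
  then show ?thesis by (simp add: labels_journey_iff)
qed

lemma jsub_WG: "k \<in> Gverts R \<Longrightarrow> sub_le (jsub R k w) (WG R)"
  using jsub_props subgraph_le_WG by blast

lemma R_cl_eq: assumes uv: "(u, v) \<in> R" and k: "k \<in> Gverts R" shows "cl R (jsub R k u) = cl R (jsub R k v)"
proof (rule cl_eqI[OF jsub_WG[OF k] jsub_WG[OF k]])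
  have k1: "k \<in> fst (cl R (jsub R k u))" and k2: "k \<in> fst (cl R (jsub R k v))"
    using cl_ext[OF jsub_WG[OF k]] jsub_props[OF k] unfolding sub_le_def by blast+
  show "sub_le (jsub R k v) (cl R (jsub R k u))"
    by (rule closed_transfer[OF cl_closed[OF jsub_WG[OF k]] uv k1 cl_ext[OF jsub_WG[OF k]]])
  show "sub_le (jsub R k u) (cl R (jsub R k v))"
    by (rule closed_transfer'[OF cl_closed[OF jsub_WG[OF k]] uv k2 cl_ext[OF jsub_WG[OF k]]])
qed

lemma model_Mdl: "Mdl R (range (rep R)) (mM R) (oM R) (iM R) (xM R) (phM R)"
  unfolding Mdl_def
proof (intro conjI model_F ballI)
  show "range (phM R) \<subseteq> range (rep R)" by (auto simp: phM_def)
  fix p assume p: "p \<in> R"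
  obtain u v where p': "p = (u, v)" by (cases p)
  have "rep R (imterm_tm u) = rep R (imterm_tm v)"
  proof (rule rep_cong, rule E_eqI)
    show "G_eq R (imterm_tm u) (imterm_tm v)" using S_R[OF p[unfolded p']] by (rule G_of_S)
    fix k assume k: "k \<in> Gverts R"
    show "cl R (gr R k (imterm_tm u)) = cl R (gr R k (imterm_tm v))"
      using R_cl_eq[OF p[unfolded p'] k] by (simp add: gr_imterm[OF k])
  qed
  then show "case p of (u, v) \<Rightarrow> eval_tm (mM R) (oM R) (iM R) (xM R) (phM R) (imterm_tm u) =
      eval_tm (mM R) (oM R) (iM R) (xM R) (phM R) (imterm_tm v)"
    by (simp add: p' model_eval)
qed

lemma S_cl_eq: assumes "S_eq R (imterm_tm u) (imterm_tm v)" and k: "k \<in> Gverts R"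
  shows "cl R (jsub R k u) = cl R (jsub R k v)"
proof -
  have "eval_tm (mM R) (oM R) (iM R) (xM R) (phM R) (imterm_tm u) = eval_tm (mM R) (oM R) (iM R) (xM R) (phM R) (imterm_tm v)"
    by (rule S_eqD[OF assms(1) model_Mdl])
  then have "rep R (imterm_tm u) = rep R (imterm_tm v)" by (simp add: model_eval)
  then have "E R (imterm_tm u) = E R (imterm_tm v)" using E_rep by metis
  then have "cl R (gr R k (imterm_tm u)) = cl R (gr R k (imterm_tm v))" by (rule E_eqD1[OF _ k])
  then show ?thesis by (simp add: gr_imterm[OF k])
qed

lemma closedR_dir:
  assumes X: "cQ_closed R R X" and S: "S_eq R (imterm_tm u) (imterm_tm v)" and g: "g \<in> fst X"
    and lj: "labels_journey R u X g h"
  shows "labels_journey R v X g h"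
proof -
  have gV: "g \<in> Gverts R" using closed_subgraph[OF X] g unfolding subgraph_def by blast
  have le: "sub_le (jsub R g u) X" and h: "gmul R g (imterm_tm u) = h" using lj by (simp_all add: labels_journey_iff)
  have "sub_le (cl R (jsub R g u)) X" by (rule closure_least[OF X le])
  then have "sub_le (cl R (jsub R g v)) X" using S_cl_eq[OF S gV] by simp
  then have "sub_le (jsub R g v) X" using cl_ext[OF jsub_WG[OF gV]] sub_le_trans by blast
  moreover have "gmul R g (imterm_tm v) = h" using h gmul_cong[OF gV G_of_S[OF S]] by simp
  ultimately show ?thesis by (simp add: labels_journey_iff)
qed

lemma closedR_closedS: "cQ_closed R R X \<longleftrightarrow> cQ_closed R (SQ R) X"
proof
  assume X: "cQ_closed R R X"
  show "cQ_closed R (SQ R) X" unfolding cQ_closed_def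
  proof (intro conjI closed_subgraph[OF X] ballI; clarify)
    fix u v g h assume uv: "(u, v) \<in> SQ R" and g: "g \<in> fst X" and "h \<in> fst X"
    have S: "S_eq R (imterm_tm u) (imterm_tm v)" using uv by (simp add: SQ_def)
    show "labels_journey R u X g h = labels_journey R v X g h"
      using closedR_dir[OF X S g] closedR_dir[OF X S_sym[OF S] g] by blast
  qed
next
  assume X: "cQ_closed R (SQ R) X"
  show "cQ_closed R R X" unfolding cQ_closed_def
  proof (intro conjI closed_subgraph[OF X] ballI; clarify)
    fix u v g h assume uv: "(u, v) \<in> R" and g: "g \<in> fst X" and h: "h \<in> fst X"
    have "(u, v) \<in> SQ R" using S_R[OF uv] by (simp add: SQ_def)
    then show "labels_journey R u X g h = labels_journey R v X g h"
      using X g h unfolding cQ_closed_def by blast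
  qed
qed

lemma FGamma_cl: "FGamma R w = cQ_closure R R (jsub R (Gone R) w)"
  unfolding FGamma_def by (rule closure_cong) (simp add: closedR_closedS)



lemma Delta_0: "Delta R w 0 = jsub R (Gone R) w" by (simp add: Delta_def)
lemma Delta_Suc: "Delta R w (Suc i) = P_expansion R (Delta R w i)" by (simp add: Delta_def)

lemma P_exp_ext: "sub_le D (P_expansion R D)" by (auto simp: P_expansion_def sub_le_def)

lemma Delta_mono: "i \<le> j \<Longrightarrow> sub_le (Delta R w i) (Delta R w j)"
proof (induction j rule: dec_induct)
  case base then show ?case by simp
next
  case (step j) then show ?case using P_exp_ext[of "Delta R w j" R] sub_le_trans by (simp add: Delta_Suc) blast
qed

lemma subgraph_Union:
  assumes D: "subgraph R D" and F: "\<And>X. X \<in> F \<Longrightarrow> subgraph R X"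
  shows "subgraph R (fst D \<union> \<Union>(fst ` F), snd D \<union> \<Union>(snd ` F))"
proof -
  have FV: "\<And>X. X \<in> F \<Longrightarrow> fst X \<subseteq> Gverts R" and FE: "\<And>X. X \<in> F \<Longrightarrow> snd X \<subseteq> Gedges R"
   and FI: "\<And>X g a h. X \<in> F \<Longrightarrow> (g, a, h) \<in> snd X \<Longrightarrow> g \<in> fst X \<and> h \<in> fst X \<and> (h, inv_letter a, g) \<in> snd X"
    using F unfolding subgraph_iff by blast+
  have DV: "fst D \<subseteq> Gverts R" and DE: "snd D \<subseteq> Gedges R"
   and DI: "\<And>g a h. (g, a, h) \<in> snd D \<Longrightarrow> g \<in> fst D \<and> h \<in> fst D \<and> (h, inv_letter a, g) \<in> snd D"
    using D unfolding subgraph_iff by blast+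
  show ?thesis unfolding subgraph_iff fst_conv snd_conv
  proof (intro conjI allI impI)
    show "fst D \<union> \<Union>(fst ` F) \<subseteq> Gverts R" using DV FV by blast
    show "snd D \<union> \<Union>(snd ` F) \<subseteq> Gedges R" using DE FE by blast
    fix g a h assume e: "(g, a, h) \<in> snd D \<union> \<Union>(snd ` F)"
    then consider "(g, a, h) \<in> snd D" | X where "X \<in> F" "(g, a, h) \<in> snd X" by blast
    then have "(g \<in> fst D \<and> h \<in> fst D \<and> (h, inv_letter a, g) \<in> snd D) \<or>
       (\<exists>X\<in>F. g \<in> fst X \<and> h \<in> fst X \<and> (h, inv_letter a, g) \<in> snd X)"
      by cases (use DI FI in blast)+
    then show "g \<in> fst D \<union> \<Union>(fst ` F)" "h \<in> fst D \<union> \<Union>(fst ` F)"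
      "(h, inv_letter a, g) \<in> snd D \<union> \<Union>(snd ` F)" by blast+
  qed
qed

lemma P_exp_alt: "P_expansion R D = (fst D \<union> \<Union>(fst ` {jsub R g v | g u v. (u, v) \<in> R \<and> g \<in> fst D \<and> sub_le (jsub R g u) D}),
   snd D \<union> \<Union>(snd ` {jsub R g v | g u v. (u, v) \<in> R \<and> g \<in> fst D \<and> sub_le (jsub R g u) D}))"
proof -
  have 1: "{fst (jsub R g v) | g u v. (u, v) \<in> R \<and> g \<in> fst D \<and> sub_le (jsub R g u) D}
     = fst ` {jsub R g v | g u v. (u, v) \<in> R \<and> g \<in> fst D \<and> sub_le (jsub R g u) D}" by blast
  have 2: "{snd (jsub R g v) | g u v. (u, v) \<in> R \<and> g \<in> fst D \<and> sub_le (jsub R g u) D}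
     = snd ` {jsub R g v | g u v. (u, v) \<in> R \<and> g \<in> fst D \<and> sub_le (jsub R g u) D}" by blast
  show ?thesis unfolding P_expansion_def 1 2 ..
qed

lemma P_exp_subgraph: assumes D: "subgraph R D" shows "subgraph R (P_expansion R D)"
proof -
  have DV: "fst D \<subseteq> Gverts R" using D unfolding subgraph_iff by blast
  show ?thesis unfolding P_exp_alt
  proof (rule subgraph_Union[OF D])
    fix X assume "X \<in> {jsub R g v | g u v. (u, v) \<in> R \<and> g \<in> fst D \<and> sub_le (jsub R g u) D}"
    then obtain g u v where "X = jsub R g v" "g \<in> fst D" by blast
    then show "subgraph R X" using jsub_props[of g R v] DV by blast
  qed
qed

lemma sub_leI: "fst A \<subseteq> fst B \<Longrightarrow> snd A \<subseteq> snd B \<Longrightarrow> sub_le A B" by (simp add: sub_le_def)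

lemma P_exp_le:
  assumes "sub_le D X" and "\<And>g u v. (u, v) \<in> R \<Longrightarrow> g \<in> fst D \<Longrightarrow> sub_le (jsub R g u) D \<Longrightarrow> sub_le (jsub R g v) X"
  shows "sub_le (P_expansion R D) X"
proof -
  have 1: "Y \<subseteq> fst X" if Y: "Y \<in> fst ` {jsub R g v | g u v. (u, v) \<in> R \<and> g \<in> fst D \<and> sub_le (jsub R g u) D}" for Y
  proof -
    obtain g u v where "Y = fst (jsub R g v)" "(u, v) \<in> R" "g \<in> fst D" "sub_le (jsub R g u) D" using Y by blast
    then show ?thesis using assms(2) unfolding sub_le_def by blast
  qed
  have 2: "Y \<subseteq> snd X" if Y: "Y \<in> snd ` {jsub R g v | g u v. (u, v) \<in> R \<and> g \<in> fst D \<and> sub_le (jsub R g u) D}" for Y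
  proof -
    obtain g u v where "Y = snd (jsub R g v)" "(u, v) \<in> R" "g \<in> fst D" "sub_le (jsub R g u) D" using Y by blast
    then show ?thesis using assms(2) unfolding sub_le_def by blast
  qed
  have a: "fst D \<subseteq> fst X" and b: "snd D \<subseteq> snd X" using assms(1) unfolding sub_le_def by blast+
  show ?thesis unfolding P_exp_alt
    by (rule sub_leI; simp only: fst_conv snd_conv; rule Un_least[OF a Union_least[OF 1]] Un_least[OF b Union_least[OF 2]])
qed

lemma P_exp_contains:
  "(u, v) \<in> R \<Longrightarrow> g \<in> fst D \<Longrightarrow> sub_le (jsub R g u) D \<Longrightarrow> sub_le (jsub R g v) (P_expansion R D)"
  unfolding P_exp_alt by (rule sub_leI; simp only: fst_conv snd_conv; blast)

lemma Delta_subgraph: "subgraph R (Delta R w i)"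
  by (induction i) (simp_all add: Delta_0 Delta_Suc P_exp_subgraph jsub_props)

lemma Delta_le_cl: "sub_le (Delta R w i) (cl R (jsub R (Gone R) w))"
proof (induction i)
  case 0
  then show ?case by (simp add: Delta_0 cl_ext jsub_WG)
next
  case (Suc i)
  let ?X = "cl R (jsub R (Gone R) w)"
  have X: "cQ_closed R R ?X" by (rule cl_closed[OF jsub_WG]) simp
  have "sub_le (jsub R g v) ?X" if "(u, v) \<in> R" "g \<in> fst (Delta R w i)" "sub_le (jsub R g u) (Delta R w i)" for g u v
  proof (rule closed_transfer[OF X that(1)])
    show "g \<in> fst ?X" using that(2) Suc unfolding sub_le_def by blast
    show "sub_le (jsub R g u) ?X" using that(3) Suc sub_le_trans by blast
  qed
  then show ?case unfolding Delta_Suc by (intro P_exp_le[OF Suc])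
qed

definition UD where "UD R w = ((\<Union>i. fst (Delta R w i)), (\<Union>i. snd (Delta R w i)))"

lemma Delta_le_UD: "sub_le (Delta R w i) (UD R w)" by (auto simp: UD_def sub_le_def)

lemma chain_finite:
  assumes "finite A" "A \<subseteq> (\<Union>i. f i)" "\<And>i j. i \<le> j \<Longrightarrow> f i \<subseteq> f (j::nat)"
  shows "\<exists>i. A \<subseteq> f i"
  using assms(1,2)
proof (induction A rule: finite_induct)
  case empty then show ?case by blast
next
  case (insert x A)
  then obtain i where i: "A \<subseteq> f i" by blast
  obtain j where j: "x \<in> f j" using insert.prems by blast
  have "insert x A \<subseteq> f (max i j)" using i j assms(3)[of i "max i j"] assms(3)[of j "max i j"] by auto
  then show ?case by blast
qed

lemma UD_transfer:
  assumes uv: "(u, v) \<in> R" and g: "g \<in> fst (UD R w)" and le: "sub_le (jsub R g u) (UD R w)"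
  shows "sub_le (jsub R g v) (UD R w)"
proof -
  have mf: "\<And>i j. i \<le> j \<Longrightarrow> fst (Delta R w i) \<subseteq> fst (Delta R w j)"
   and ms: "\<And>i j. i \<le> j \<Longrightarrow> snd (Delta R w i) \<subseteq> snd (Delta R w j)"
    using Delta_mono unfolding sub_le_def by blast+
  have "\<exists>i. fst (jsub R g u) \<subseteq> fst (Delta R w i)"
    by (rule chain_finite) (use jsub_finite[of R g u] le mf in \<open>auto simp: sub_le_def UD_def\<close>)
  then obtain i1 where i1: "fst (jsub R g u) \<subseteq> fst (Delta R w i1)" by blast
  have "\<exists>i. snd (jsub R g u) \<subseteq> snd (Delta R w i)"
    by (rule chain_finite) (use jsub_finite[of R g u] le ms in \<open>auto simp: sub_le_def UD_def\<close>)
  then obtain i2 where i2: "snd (jsub R g u) \<subseteq> snd (Delta R w i2)" by blast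
  obtain i3 where i3: "g \<in> fst (Delta R w i3)" using g unfolding UD_def by auto
  define i where "i = max i1 (max i2 i3)"
  have le1: "i1 \<le> i" "i2 \<le> i" "i3 \<le> i" unfolding i_def by auto
  have "sub_le (jsub R g u) (Delta R w i)" using i1 i2 mf[OF le1(1)] ms[OF le1(2)] unfolding sub_le_def by blast
  moreover have "g \<in> fst (Delta R w i)" using i3 mf[OF le1(3)] by blast
  ultimately have "sub_le (jsub R g v) (Delta R w (Suc i))"
    unfolding Delta_Suc by (rule P_exp_contains[OF uv, rotated])
  then show ?thesis using Delta_le_UD sub_le_trans by blast
qed

lemma UD_closed: assumes "sym R" shows "cQ_closed R R (UD R w)"
proof -
  have sg: "subgraph R (UD R w)"
    using Delta_subgraph[of R w] unfolding subgraph_iff UD_def by simp blast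
  have dir: "labels_journey R v (UD R w) g h" if "(u, v) \<in> R" "g \<in> fst (UD R w)" "labels_journey R u (UD R w) g h" for u v g h
  proof -
    have gV: "g \<in> Gverts R" using sg that(2) unfolding subgraph_iff by blast
    have "sub_le (jsub R g v) (UD R w)" using UD_transfer[OF that(1,2)] that(3) by (simp add: labels_journey_iff)
    moreover have "gmul R g (imterm_tm v) = h"
      using that(3) gmul_cong[OF gV G_of_S[OF S_R[OF that(1)]]] by (simp add: labels_journey_iff)
    ultimately show ?thesis by (simp add: labels_journey_iff)
  qed
  show ?thesis unfolding cQ_closed_def
  proof (intro conjI sg ballI; clarify)
    fix u v g h assume uv: "(u, v) \<in> R" and g: "g \<in> fst (UD R w)" and "h \<in> fst (UD R w)"
    have vu: "(v, u) \<in> R" using assms uv unfolding sym_def by blast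
    show "labels_journey R u (UD R w) g h = labels_journey R v (UD R w) g h"
      using dir[OF uv g] dir[OF vu g] by blast
  qed
qed

lemma UD_eq_cl: assumes "sym R" shows "UD R w = cl R (jsub R (Gone R) w)"
proof (rule sub_le_antisym)
  have a: "\<And>i. fst (Delta R w i) \<subseteq> fst (cl R (jsub R (Gone R) w))"
   and b: "\<And>i. snd (Delta R w i) \<subseteq> snd (cl R (jsub R (Gone R) w))"
    using Delta_le_cl[of R w] unfolding sub_le_def by blast+
  show "sub_le (UD R w) (cl R (jsub R (Gone R) w))"
    unfolding UD_def sub_le_def fst_conv snd_conv using a b by (intro conjI UN_least)
  show "sub_le (cl R (jsub R (Gone R) w)) (UD R w)"
    by (rule closure_least[OF UD_closed[OF assms]]) (use Delta_le_UD[of R w 0] in \<open>simp add: Delta_0\<close>)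
qed

theorem mainTheorem11:
  fixes R :: "('x imterm \<times> 'x imterm) set" and w :: "'x imterm"
  assumes "sym R"
  shows "FGamma R w = cQ_closure R R (jsub R (Gone R) w) \<and>
         FGamma R w = ((\<Union>i. fst (Delta R w i)), (\<Union>i. snd (Delta R w i)))"
  using FGamma_cl[of R w] UD_eq_cl[OF assms, of w] by (simp add: UD_def)


end
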